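(* Let $T,k\in\mathbb{N}$ and let $w\in\{0,1\}^T$ be a random variable satisfying the $\epsilon$-martingale condition. Decompose $w=xy$ with $|y|=k$. Then \[ \Pr[\text{there is an } x\text{-balanced fork for } xy] = \Pr[\mu_x(y)\ge 0]\le \exp(-\Omega(k)), \] where the asymptotic notation hides constants depending only on $\epsilon$.
   Context: Characteristic strings and forks. A characteristic string is $w=w_1\dots w_n\in\{0,1\}^n$; index $i$ is honest if $w_i=0$ and adversarial if $w_i=1$. A fork for $w$ is a rooted tree $F$ with edges directed away from the root $r$ and labeling $\ell:V\to\{0,\dots,n\}$ with (F1) $\ell(r)=0$; (F2) labels strictly increasing along directed paths; (F3) each honest index labels exactly one vertex; (F4) for honest $i<j$ the vertex labeled $i$ has strictly smaller depth than the vertex labeled $j$. Write $F\vdash w$. A vertex is honest if it is the root or labeled by an honest index. A tine is a directed path from the root; its length is its number of edges, $\ell(t)$ the label of its last vertex; $\mathrm{height}(F)$ is the maximal tine length. A fork is closed if every leaf is honest (the single-vertex fork is closed); a closed fork has a unique longest tine $\hat t$. Reach and relative margin. For closed $F\vdash w$ and tine $t$: $\mathrm{gap}(t)=\mathrm{length}(\hat t)-\mathrm{length}(t)$, $\mathrm{reserve}(t)=|\{i: w_i=1,\ i>\ell(t)\}|$, $\mathrm{reach}(t)=\mathrm{reserve}(t)-\mathrm{gap}(t)$. For $w=xy$, tines $t_1,t_2$ are disjoint over $y$ (written $t_1\not\sim_x t_2$) if they share no edge terminating at a vertex whose label is an index of $y$ (label $>|x|$); a tine may be paired with itself. $\mu_x(F)=\max_{t_1\not\sim_x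 t_2}\min\{\mathrm{reach}(t_1),\mathrm{reach}(t_2)\}$ and $\mu_x(y)=\max\{\mu_x(F): F\vdash xy \text{ closed}\}$. A fork $F\vdash xy$ is $x$-balanced if it contains tines $t_1\not\sim_x t_2$ with $\mathrm{length}(t_1)=\mathrm{length}(t_2)=\mathrm{height}(F)$. A random variable $W\in\{0,1\}^n$ satisfies the $\epsilon$-martingale condition ($\epsilon\in(0,1)$) if for every $t$, $\Pr[W_t=1\mid W_1,\dots,W_{t-1}]\le(1-\epsilon)/2$. *)

theory Defs
  imports "HOL-Probability.Probability_Mass_Function"
begin

text \<open>Characteristic strings are lists of booleans; index i (1-based) is
adversarial iff w ! (i-1) = True (i.e. w_i = 1), honest iff it is False.\<close>

definition adv_idx :: "bool list \<Rightarrow> nat \<Rightarrow> bool" where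
  "adv_idx w i \<longleftrightarrow> 1 \<le> i \<and> i \<le> length w \<and> w ! (i - 1)"

definition hon_idx :: "bool list \<Rightarrow> nat \<Rightarrow> bool" where
  "hon_idx w i \<longleftrightarrow> 1 \<le> i \<and> i \<le> length w \<and> \<not> w ! (i - 1)"

text \<open>A fork is a finite rooted tree whose vertices are natural numbers, the root
being 0; every non-root vertex v has the parent vertex parent v (edge directed
from parent v to v); label gives the labelling.\<close>

record fork =
  verts :: "nat set"
  parent :: "nat \<Rightarrow> nat"
  label :: "nat \<Rightarrow> nat"

definition depth :: "fork \<Rightarrow> nat \<Rightarrow> nat" where
  "depth F v = (LEAST n. (parent F ^^ n) v = 0)"

definition is_tree :: "fork \<Rightarrow> bool" where
  "is_tree F \<longleftrightarrow> finite (verts F) \<and> 0 \<in> verts F \<and>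
     (\<forall>v \<in> verts F - {0}. parent F v \<in> verts F \<and> (\<exists>n. (parent F ^^ n) v = 0))"

definition tine_verts :: "fork \<Rightarrow> nat \<Rightarrow> nat set" where
  "tine_verts F v = {(parent F ^^ i) v | i. i \<le> depth F v}"

definition is_fork :: "bool list \<Rightarrow> fork \<Rightarrow> bool" where
  "is_fork w F \<longleftrightarrow> is_tree F \<and>
     label F 0 = 0 \<and>
     (\<forall>v \<in> verts F. label F v \<le> length w) \<and>
     (\<forall>v \<in> verts F - {0}. label F (parent F v) < label F v) \<and>
     (\<forall>i. hon_idx w i \<longrightarrow> (\<exists>!v. v \<in> verts F \<and> label F v = i)) \<and>
     (\<forall>u \<in> verts F. \<forall>v \<in> verts F. hon_idx w (label F u) \<and> hon_idx w (label F v)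
        \<and> label F u < label F v \<longrightarrow> depth F u < depth F v)"

definition honest_vertex :: "bool list \<Rightarrow> fork \<Rightarrow> nat \<Rightarrow> bool" where
  "honest_vertex w F v \<longleftrightarrow> v = 0 \<or> hon_idx w (label F v)"

definition is_leaf :: "fork \<Rightarrow> nat \<Rightarrow> bool" where
  "is_leaf F v \<longleftrightarrow> v \<in> verts F \<and> \<not> (\<exists>u \<in> verts F - {0}. parent F u = v)"

definition closed_fork :: "bool list \<Rightarrow> fork \<Rightarrow> bool" where
  "closed_fork w F \<longleftrightarrow> is_fork w F \<and> (\<forall>v. is_leaf F v \<longrightarrow> honest_vertex w F v)"

definition height :: "fork \<Rightarrow> nat" where
  "height F = Max (depth F ` verts F)"

text \<open>Tines are identified with their terminal vertex; length = depth,
the label of the tine is the label of its last vertex.  For a closed fork the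
unique longest tine has length height F.\<close>

definition gap :: "fork \<Rightarrow> nat \<Rightarrow> int" where
  "gap F t = int (height F) - int (depth F t)"

definition reserve :: "bool list \<Rightarrow> fork \<Rightarrow> nat \<Rightarrow> int" where
  "reserve w F t = int (card {i. adv_idx w i \<and> i > label F t})"

definition reach :: "bool list \<Rightarrow> fork \<Rightarrow> nat \<Rightarrow> int" where
  "reach w F t = reserve w F t - gap F t"

text \<open>Disjointness over y (where |x| = m): the tines share no edge terminating at a
vertex with label > m; an edge is determined by the vertex it terminates at.\<close>
definition disjoint_over :: "nat \<Rightarrow> fork \<Rightarrow> nat \<Rightarrow> nat \<Rightarrow> bool" where
  "disjoint_over m F t1 t2 \<longleftrightarrow>
     (\<forall>u \<in> tine_verts F t1 \<inter> tine_verts F t2. u \<noteq> 0 \<longrightarrow> label F u \<le> m)"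

definition mu_fork :: "bool list \<Rightarrow> nat \<Rightarrow> fork \<Rightarrow> int" where
  "mu_fork w m F = Max {min (reach w F t1) (reach w F t2) | t1 t2.
       t1 \<in> verts F \<and> t2 \<in> verts F \<and> disjoint_over m F t1 t2}"

definition mu :: "bool list \<Rightarrow> bool list \<Rightarrow> int" where
  "mu x y = Max {mu_fork (x @ y) (length x) F | F. closed_fork (x @ y) F}"

definition balanced :: "bool list \<Rightarrow> nat \<Rightarrow> fork \<Rightarrow> bool" where
  "balanced w m F \<longleftrightarrow> is_fork w F \<and>
     (\<exists>t1 \<in> verts F. \<exists>t2 \<in> verts F. disjoint_over m F t1 t2 \<and>
        depth F t1 = height F \<and> depth F t2 = height F)"

text \<open>epsilon-martingale condition for a distribution W on {0,1}^T:
Pr[W_t = 1 | W_1..W_{t-1}] <= (1-eps)/2, stated multiplicatively (so that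
conditioning on null prefixes is vacuous).\<close>
definition martingale_cond :: "real \<Rightarrow> nat \<Rightarrow> bool list pmf \<Rightarrow> bool" where
  "martingale_cond \<epsilon> T W \<longleftrightarrow>
     (\<forall>p. length p < T \<longrightarrow>
        measure_pmf.prob W {w. take (length p + 1) w = p @ [True]}
          \<le> (1 - \<epsilon>) / 2 * measure_pmf.prob W {w. take (length p) w = p})"

end

theory Submission
  imports Defs
begin


lemma depth_zero[simp]: "depth F 0 = 0"
  unfolding depth_def by simp

lemma depth_reach:
  assumes T: "is_tree F" and v: "v \<in> verts F"
  shows "(parent F ^^ depth F v) v = 0"
proof (cases "v = 0")
  case True then show ?thesis by simp
next
  case False
  with T v obtain n where "(parent F ^^ n) v = 0" unfolding is_tree_def by blast
  then show ?thesis unfolding depth_def by (rule LeastI)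
qed

lemma depth_nonzero:
  assumes "i < depth F v" shows "(parent F ^^ i) v \<noteq> 0"
  using assms not_less_Least unfolding depth_def by blast

lemma funpow_in_verts:
  assumes T: "is_tree F" and v: "v \<in> verts F" and i: "i \<le> depth F v"
  shows "(parent F ^^ i) v \<in> verts F"
  using i
proof (induction i)
  case 0 then show ?case using v by simp
next
  case (Suc i)
  then have a: "(parent F ^^ i) v \<in> verts F" by simp
  have "(parent F ^^ i) v \<noteq> 0" using Suc.prems depth_nonzero by simp
  then show ?case using a T unfolding is_tree_def by auto
qed

lemma depth_parent:
  assumes T: "is_tree F" and v: "v \<in> verts F" and nz: "v \<noteq> 0"
  shows "depth F v = Suc (depth F (parent F v))"
proof -
  have pv: "parent F v \<in> verts F" using T v nz unfolding is_tree_def by auto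
  have r1: "(parent F ^^ depth F v) v = 0" by (rule depth_reach[OF T v])
  have d0: "depth F v \<noteq> 0" using r1 nz by (metis funpow_0)
  then obtain d where d: "depth F v = Suc d" by (cases "depth F v") auto
  have "(parent F ^^ d) (parent F v) = 0" using r1 d by (simp add: funpow_Suc_right del: funpow.simps)
  then have le1: "depth F (parent F v) \<le> d" unfolding depth_def by (rule Least_le)
  have "(parent F ^^ Suc (depth F (parent F v))) v = 0"
    using depth_reach[OF T pv] by (simp add: funpow_Suc_right del: funpow.simps)
  then have "depth F v \<le> Suc (depth F (parent F v))" unfolding depth_def by (rule Least_le)
  then show ?thesis using le1 d by simp
qed

lemma depth_funpow:
  assumes T: "is_tree F" and v: "v \<in> verts F" and i: "i \<le> depth F v"
  shows "depth F ((parent F ^^ i) v) = depth F v - i"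
  using i
proof (induction i)
  case 0 then show ?case by simp
next
  case (Suc i)
  have a: "(parent F ^^ i) v \<in> verts F" using funpow_in_verts[OF T v] Suc.prems by simp
  have nz: "(parent F ^^ i) v \<noteq> 0" using Suc.prems depth_nonzero by simp
  have "depth F ((parent F ^^ i) v) = Suc (depth F ((parent F ^^ Suc i) v))"
    using depth_parent[OF T a nz] by simp
  then show ?case using Suc by simp
qed

lemma is_fork_tree: "is_fork w F \<Longrightarrow> is_tree F"
  unfolding is_fork_def by simp

lemma label_funpow_less:
  assumes Fk: "is_fork w F" and v: "v \<in> verts F" and ij: "i < j" and j: "j \<le> depth F v"
  shows "label F ((parent F ^^ j) v) < label F ((parent F ^^ i) v)"
  using ij j
proof (induction j)
  case 0 then show ?case by simp
next
  case (Suc j)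
  have T: "is_tree F" using Fk is_fork_tree by blast
  have a: "(parent F ^^ j) v \<in> verts F" using funpow_in_verts[OF T v] Suc.prems by simp
  have nz: "(parent F ^^ j) v \<noteq> 0" using Suc.prems depth_nonzero by simp
  have "label F ((parent F ^^ Suc j) v) < label F ((parent F ^^ j) v)"
    using Fk a nz unfolding is_fork_def by auto
  then show ?case using Suc by (cases "i = j") auto
qed

lemma depth_le_label:
  assumes Fk: "is_fork w F" and v: "v \<in> verts F"
  shows "depth F v \<le> label F v"
proof -
  have T: "is_tree F" using Fk is_fork_tree by blast
  have "\<forall>v. v \<in> verts F \<longrightarrow> depth F v = n \<longrightarrow> n \<le> label F v" for n
  proof (induction n)
    case 0 then show ?case by simp
  next
    case (Suc n)
    show ?case
    proof (intro allI impI)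
      fix v assume v: "v \<in> verts F" and d: "depth F v = Suc n"
      have nz: "v \<noteq> 0" using d by (metis depth_zero nat.distinct(1))
      have pv: "parent F v \<in> verts F" using T v nz unfolding is_tree_def by auto
      have "depth F (parent F v) = n" using depth_parent[OF T v nz] d by simp
      then have "n \<le> label F (parent F v)" using Suc pv by blast
      moreover have "label F (parent F v) < label F v" using Fk v nz unfolding is_fork_def by auto
      ultimately show "Suc n \<le> label F v" by simp
    qed
  qed
  then show ?thesis using v by blast
qed

lemma label_le_len: "is_fork w F \<Longrightarrow> v \<in> verts F \<Longrightarrow> label F v \<le> length w"
  unfolding is_fork_def by blast

lemma depth_le_len: "is_fork w F \<Longrightarrow> v \<in> verts F \<Longrightarrow> depth F v \<le> length w"
  using depth_le_label label_le_len le_trans by blast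

lemma height_ge: "is_tree F \<Longrightarrow> v \<in> verts F \<Longrightarrow> depth F v \<le> height F"
  unfolding height_def is_tree_def by auto

lemma height_le_len: assumes "is_fork w F" shows "height F \<le> length w"
proof -
  have T: "is_tree F" using assms is_fork_tree by blast
  then have "finite (verts F)" "verts F \<noteq> {}" unfolding is_tree_def by auto
  then show ?thesis unfolding height_def using depth_le_len[OF assms] by auto
qed

lemma height_attained: assumes "is_tree F" shows "\<exists>v\<in>verts F. depth F v = height F"
proof -
  have "finite (verts F)" "verts F \<noteq> {}" using assms unfolding is_tree_def by auto
  then have "Max (depth F ` verts F) \<in> depth F ` verts F" by (intro Max_in) auto
  then show ?thesis unfolding height_def by auto
qed

lemma tine_verts_sub: "is_tree F \<Longrightarrow> v \<in> verts F \<Longrightarrow> tine_verts F v \<subseteq> verts F"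
  unfolding tine_verts_def using funpow_in_verts by blast

lemma tine_verts_zero[simp]: "tine_verts F 0 = {0}"
  unfolding tine_verts_def by auto

lemma hon_adv_excl: "hon_idx w i \<Longrightarrow> adv_idx w i \<Longrightarrow> False"
  unfolding hon_idx_def adv_idx_def by auto

lemma nonroot_hon_or_adv:
  assumes Fk: "is_fork w F" and v: "v \<in> verts F" and nz: "v \<noteq> 0"
  shows "hon_idx w (label F v) \<or> adv_idx w (label F v)"
proof -
  have T: "is_tree F" using Fk is_fork_tree by blast
  have pv: "parent F v \<in> verts F" using T v nz unfolding is_tree_def by auto
  have "label F (parent F v) < label F v" using Fk v nz unfolding is_fork_def by auto
  then have "1 \<le> label F v" by simp
  moreover have "label F v \<le> length w" using label_le_len[OF Fk v] .
  ultimately show ?thesis unfolding hon_idx_def adv_idx_def by auto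
qed

lemma label_nonroot_pos:
  assumes Fk: "is_fork w F" and v: "v \<in> verts F" and nz: "v \<noteq> 0"
  shows "0 < label F v"
proof -
  have "label F (parent F v) < label F v" using Fk v nz unfolding is_fork_def by auto
  then show ?thesis by simp
qed

lemma label_root: "is_fork w F \<Longrightarrow> label F 0 = 0"
  unfolding is_fork_def by simp

lemma hon_pos: "hon_idx w i \<Longrightarrow> 1 \<le> i \<and> i \<le> length w"
  unfolding hon_idx_def by auto

lemma hon_vertex:
  assumes Fk: "is_fork w F" and h: "hon_idx w i"
  shows "\<exists>!v. v \<in> verts F \<and> label F v = i"
  using Fk h unfolding is_fork_def by blast

lemma finite_idx_set: "finite {i::nat. a < i \<and> i \<le> b \<and> P i}"
  by (rule finite_subset[of _ "{..b}"]) auto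

lemma finite_idx_set2: "finite {i::nat. a < i \<and> i < b \<and> P i}"
  by (rule finite_subset[of _ "{..b}"]) auto

lemma honest_depth:
  assumes Fk: "is_fork w F" and z: "z \<in> verts F" and zh: "z = 0 \<or> hon_idx w (label F z)"
  shows "c \<in> verts F \<Longrightarrow> hon_idx w (label F c) \<Longrightarrow> label F z < label F c \<Longrightarrow>
     depth F z + card {i. label F z < i \<and> i \<le> label F c \<and> hon_idx w i} \<le> depth F c"
proof (induction "label F c" arbitrary: c rule: less_induct)
  case less
  have T: "is_tree F" using Fk is_fork_tree by blast
  define H where "H = {i. label F z < i \<and> i < label F c \<and> hon_idx w i}"
  have fH: "finite H" unfolding H_def by (rule finite_idx_set2)
  have cnz: "c \<noteq> 0"
  proof
    assume "c = 0" then show False using less.prems(2) label_root[OF Fk] hon_pos[of w "label F c"] by simp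
  qed
  show ?case
  proof (cases "H = {}")
    case True
    then have eq: "{i. label F z < i \<and> i \<le> label F c \<and> hon_idx w i} = {label F c}"
      using less.prems unfolding H_def by (auto simp: le_less)
    have "depth F z < depth F c"
    proof (cases "z = 0")
      case True
      then show ?thesis using depth_parent[OF T less.prems(1) cnz] by simp
    next
      case False
      then have "hon_idx w (label F z)" using zh by simp
      then show ?thesis using Fk z less.prems unfolding is_fork_def by blast
    qed
    then show ?thesis using eq by simp
  next
    case False
    define j where "j = Max H"
    have jH: "j \<in> H" unfolding j_def using fH False by (rule Max_in)
    have jmax: "\<And>i. i \<in> H \<Longrightarrow> i \<le> j" unfolding j_def using fH by simp
    have hj: "hon_idx w j" using jH unfolding H_def by simp
    obtain c' where c': "c' \<in> verts F" "label F c' = j" using hon_vertex[OF Fk hj] by blast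
    have jlt: "j < label F c" "label F z < j" using jH unfolding H_def by auto
    have IH: "depth F z + card {i. label F z < i \<and> i \<le> j \<and> hon_idx w i} \<le> depth F c'"
      using less.hyps[of c'] c' jlt hj by simp
    have dlt: "depth F c' < depth F c" using Fk c' less.prems hj jlt unfolding is_fork_def by blast
    have eq: "{i. label F z < i \<and> i \<le> label F c \<and> hon_idx w i}
        = insert (label F c) {i. label F z < i \<and> i \<le> j \<and> hon_idx w i}"
    proof (intro set_eqI iffI)
      fix i assume i: "i \<in> {i. label F z < i \<and> i \<le> label F c \<and> hon_idx w i}"
      show "i \<in> insert (label F c) {i. label F z < i \<and> i \<le> j \<and> hon_idx w i}"
      proof (cases "i = label F c")
        case False
        then have "i \<in> H" using i unfolding H_def by auto
        then show ?thesis using jmax[of i] i by auto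
      qed simp
    next
      fix i assume "i \<in> insert (label F c) {i. label F z < i \<and> i \<le> j \<and> hon_idx w i}"
      then show "i \<in> {i. label F z < i \<and> i \<le> label F c \<and> hon_idx w i}"
        using jlt less.prems by auto
    qed
    have "label F c \<notin> {i. label F z < i \<and> i \<le> j \<and> hon_idx w i}" using jlt by auto
    then have "card {i. label F z < i \<and> i \<le> label F c \<and> hon_idx w i}
       = Suc (card {i. label F z < i \<and> i \<le> j \<and> hon_idx w i})"
      unfolding eq using finite_idx_set by simp
    then show ?thesis using IH dlt by simp
  qed
qed

lemma chain_count:
  assumes Fk: "is_fork w F" and v: "v \<in> verts F" and lh: "lo \<le> hi" and hd: "hi \<le> depth F v"
    and adv: "\<And>i. lo \<le> i \<Longrightarrow> i < hi \<Longrightarrow> adv_idx w (label F ((parent F ^^ i) v))"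
  shows "hi - lo \<le> card {j. label F ((parent F ^^ hi) v) < j \<and> j \<le> label F ((parent F ^^ lo) v) \<and> adv_idx w j}"
proof -
  let ?f = "\<lambda>i. label F ((parent F ^^ i) v)"
  have inj: "inj_on ?f {lo..<hi}"
  proof (rule inj_onI)
    fix a b assume a: "a \<in> {lo..<hi}" and b: "b \<in> {lo..<hi}" and e: "?f a = ?f b"
    show "a = b"
    proof (rule ccontr)
      assume "a \<noteq> b"
      then have "a < b \<or> b < a" by arith
      then show False using label_funpow_less[OF Fk v, of a b] label_funpow_less[OF Fk v, of b a] a b hd e by auto
    qed
  qed
  have sub: "?f ` {lo..<hi} \<subseteq> {j. ?f hi < j \<and> j \<le> ?f lo \<and> adv_idx w j}"
  proof
    fix x assume "x \<in> ?f ` {lo..<hi}"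
    then obtain i where i: "lo \<le> i" "i < hi" "x = ?f i" by auto
    have "?f hi < ?f i" using label_funpow_less[OF Fk v i(2) hd] .
    moreover have "?f i \<le> ?f lo" using label_funpow_less[OF Fk v, of lo i] i hd by (cases "lo = i") auto
    ultimately show "x \<in> {j. ?f hi < j \<and> j \<le> ?f lo \<and> adv_idx w j}" using i adv by auto
  qed
  have "card {lo..<hi} \<le> card {j. ?f hi < j \<and> j \<le> ?f lo \<and> adv_idx w j}"
    using card_inj_on_le[OF inj sub finite_idx_set] .
  then show ?thesis by simp
qed

definition catalan :: "bool list \<Rightarrow> nat \<Rightarrow> bool" where
  "catalan w h \<longleftrightarrow> hon_idx w h \<and> (\<forall>a b. a < h \<longrightarrow> h < b \<longrightarrow> b \<le> Suc (length w) \<longrightarrow>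
     card {i. a < i \<and> i < b \<and> adv_idx w i} < card {i. a < i \<and> i < b \<and> hon_idx w i})"

lemma card_insert_top:
  assumes "a < b" "hon_idx w b"
  shows "card {i. a < i \<and> i \<le> b \<and> hon_idx w i} = Suc (card {i. a < i \<and> i < b \<and> hon_idx w i})"
proof -
  have "{i. a < i \<and> i \<le> b \<and> hon_idx w i} = insert b {i. a < i \<and> i < b \<and> hon_idx w i}"
    using assms by auto
  then show ?thesis using finite_idx_set2 by simp
qed

lemma tine_hits:
  assumes Fk: "is_fork w F" and t: "t \<in> verts F" and dt: "depth F t = height F"
    and cat: "catalan w h"
  shows "\<exists>i\<le>depth F t. label F ((parent F ^^ i) t) = h"
proof (rule ccontr)
  assume nh: "\<not> ?thesis"
  have T: "is_tree F" using Fk is_fork_tree by blast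
  define a where "a i = (parent F ^^ i) t" for i
  have hh: "hon_idx w h" using cat unfolding catalan_def by simp
  have h1: "1 \<le> h" "h \<le> length w" using hon_pos[OF hh] by auto
  define Z where "Z = {i. i \<le> depth F t \<and> label F (a i) < h \<and> (a i = 0 \<or> hon_idx w (label F (a i)))}"
  have aD: "a (depth F t) = 0" unfolding a_def using depth_reach[OF T t] .
  have "depth F t \<in> Z" unfolding Z_def using aD label_root[OF Fk] h1 by simp
  then have Zne: "Z \<noteq> {}" by blast
  have fZ: "finite Z" unfolding Z_def by auto
  define iz where "iz = Min Z"
  have izZ: "iz \<in> Z" unfolding iz_def using fZ Zne by (rule Min_in)
  have izmin: "\<And>i. i \<in> Z \<Longrightarrow> iz \<le> i" unfolding iz_def using fZ by simp
  define z where "z = a iz"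
  have izd: "iz \<le> depth F t" and zlt: "label F z < h" and zh: "z = 0 \<or> hon_idx w (label F z)"
    using izZ unfolding Z_def z_def by auto
  have zv: "z \<in> verts F" unfolding z_def a_def using funpow_in_verts[OF T t izd] .
  have av: "\<And>i. i \<le> depth F t \<Longrightarrow> a i \<in> verts F" unfolding a_def using funpow_in_verts[OF T t] by blast
  have anz: "\<And>i. i < depth F t \<Longrightarrow> a i \<noteq> 0" unfolding a_def using depth_nonzero by blast
  have dz: "depth F z = depth F t - iz" unfolding z_def a_def using depth_funpow[OF T t izd] .
  have before: "\<And>i. i < iz \<Longrightarrow> hon_idx w (label F (a i)) \<Longrightarrow> h < label F (a i)"
  proof -
    fix i assume i: "i < iz" and hi: "hon_idx w (label F (a i))"
    have "label F (a i) \<noteq> h" using nh i izd unfolding a_def by auto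
    moreover have "\<not> label F (a i) < h"
    proof
      assume "label F (a i) < h"
      then have "i \<in> Z" unfolding Z_def using i izd hi by auto
      then show False using izmin i by fastforce
    qed
    ultimately show "h < label F (a i)" by simp
  qed
  define Cs where "Cs = {i. i < iz \<and> hon_idx w (label F (a i))}"
  have fC: "finite Cs" unfolding Cs_def by auto
  show False
  proof (cases "Cs = {}")
    case False
    define ic where "ic = Max Cs"
    have icC: "ic \<in> Cs" unfolding ic_def using fC False by (rule Max_in)
    have icmax: "\<And>i. i \<in> Cs \<Longrightarrow> i \<le> ic" unfolding ic_def using fC by simp
    define c where "c = a ic"
    have iciz: "ic < iz" and hc: "hon_idx w (label F c)" using icC unfolding Cs_def c_def by auto
    have cgt: "h < label F c" using before[OF iciz] hc unfolding c_def by simp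
    have cv: "c \<in> verts F" unfolding c_def using av iciz izd by simp
    have dc: "depth F c = depth F t - ic" unfolding c_def a_def using depth_funpow[OF T t] iciz izd by simp
    have adv: "\<And>i. Suc ic \<le> i \<Longrightarrow> i < iz \<Longrightarrow> adv_idx w (label F ((parent F ^^ i) t))"
    proof -
      fix i assume i: "Suc ic \<le> i" "i < iz"
      have "i \<notin> Cs" using icmax[of i] i by auto
      then have "\<not> hon_idx w (label F (a i))" using i unfolding Cs_def by auto
      moreover have "a i \<noteq> 0" using anz i izd by simp
      moreover have "i \<le> depth F t" using i izd by simp
      ultimately show "adv_idx w (label F ((parent F ^^ i) t))"
        using nonroot_hon_or_adv[OF Fk av] unfolding a_def by blast
    qed
    have cc: "iz - Suc ic \<le> card {j. label F ((parent F ^^ iz) t) < j \<and> j \<le> label F ((parent F ^^ Suc ic) t) \<and> adv_idx w j}"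
      using chain_count[OF Fk t _ izd, of "Suc ic"] adv iciz by (simp del: funpow.simps)
    have lsc: "label F ((parent F ^^ Suc ic) t) < label F c"
      unfolding c_def a_def using label_funpow_less[OF Fk t, of ic "Suc ic"] iciz izd by simp
    have "{j. label F ((parent F ^^ iz) t) < j \<and> j \<le> label F ((parent F ^^ Suc ic) t) \<and> adv_idx w j}
        \<subseteq> {j. label F z < j \<and> j < label F c \<and> adv_idx w j}"
      using lsc unfolding z_def a_def by auto
    then have cc2: "iz - Suc ic \<le> card {j. label F z < j \<and> j < label F c \<and> adv_idx w j}"
      using cc card_mono[OF finite_idx_set2] le_trans by blast
    have hd: "depth F z + card {i. label F z < i \<and> i \<le> label F c \<and> hon_idx w i} \<le> depth F c"
      using honest_depth[OF Fk zv zh cv hc] zlt cgt by simp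
    have "card {i. label F z < i \<and> i \<le> label F c \<and> hon_idx w i} = Suc (card {i. label F z < i \<and> i < label F c \<and> hon_idx w i})"
      using card_insert_top zlt cgt hc by simp
    then have hon_le: "card {i. label F z < i \<and> i < label F c \<and> hon_idx w i} \<le> card {j. label F z < j \<and> j < label F c \<and> adv_idx w j}"
      using hd dz dc cc2 iciz izd by simp
    have "label F c \<le> Suc (length w)" using label_le_len[OF Fk cv] by simp
    then have "card {j. label F z < j \<and> j < label F c \<and> adv_idx w j} < card {i. label F z < i \<and> i < label F c \<and> hon_idx w i}"
      using cat zlt cgt unfolding catalan_def by blast
    then show False using hon_le by simp
  next
    case True
    have adv: "\<And>i. 0 \<le> i \<Longrightarrow> i < iz \<Longrightarrow> adv_idx w (label F ((parent F ^^ i) t))"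
    proof -
      fix i assume i: "0 \<le> i" "i < iz"
      have "\<not> hon_idx w (label F (a i))" using True i unfolding Cs_def by auto
      moreover have "a i \<noteq> 0" using anz i izd by simp
      moreover have "i \<le> depth F t" using i izd by simp
      ultimately show "adv_idx w (label F ((parent F ^^ i) t))"
        using nonroot_hon_or_adv[OF Fk av] unfolding a_def by blast
    qed
    have cc: "iz - 0 \<le> card {j. label F ((parent F ^^ iz) t) < j \<and> j \<le> label F ((parent F ^^ 0) t) \<and> adv_idx w j}"
      using chain_count[OF Fk t le0 izd adv] by simp
    have "{j. label F ((parent F ^^ iz) t) < j \<and> j \<le> label F ((parent F ^^ 0) t) \<and> adv_idx w j}
        \<subseteq> {j. label F z < j \<and> j < Suc (length w) \<and> adv_idx w j}"
      unfolding z_def a_def using label_le_len[OF Fk t] by auto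
    then have "card {j. label F ((parent F ^^ iz) t) < j \<and> j \<le> label F ((parent F ^^ 0) t) \<and> adv_idx w j}
       \<le> card {j. label F z < j \<and> j < Suc (length w) \<and> adv_idx w j}"
      by (rule card_mono[OF finite_idx_set2])
    then have cc2: "iz \<le> card {j. label F z < j \<and> j < Suc (length w) \<and> adv_idx w j}"
      using cc by linarith
    define Hs where "Hs = {i. label F z < i \<and> i < Suc (length w) \<and> hon_idx w i}"
    have catall: "\<And>a b. a < h \<Longrightarrow> h < b \<Longrightarrow> b \<le> Suc (length w) \<Longrightarrow>
       card {i. a < i \<and> i < b \<and> adv_idx w i} < card {i. a < i \<and> i < b \<and> hon_idx w i}"
      using cat unfolding catalan_def by blast
    have catc: "card {j. label F z < j \<and> j < Suc (length w) \<and> adv_idx w j} < card Hs"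
      unfolding Hs_def using catall[of "label F z" "Suc (length w)"] zlt h1 by simp
    then have Hne: "Hs \<noteq> {}" by auto
    have fH: "finite Hs" unfolding Hs_def by (rule finite_idx_set2)
    define js where "js = Max Hs"
    have jsH: "js \<in> Hs" unfolding js_def using fH Hne by (rule Max_in)
    have jsmax: "\<And>i. i \<in> Hs \<Longrightarrow> i \<le> js" unfolding js_def using fH by simp
    have hjs: "hon_idx w js" and jsz: "label F z < js" using jsH unfolding Hs_def by auto
    obtain cs where cs: "cs \<in> verts F" "label F cs = js" using hon_vertex[OF Fk hjs] by blast
    have "{i. label F z < i \<and> i \<le> js \<and> hon_idx w i} = Hs"
    proof (intro set_eqI iffI)
      fix i assume "i \<in> {i. label F z < i \<and> i \<le> js \<and> hon_idx w i}"
      then show "i \<in> Hs" unfolding Hs_def using hon_pos[of w i] by auto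
    next
      fix i assume "i \<in> Hs"
      then show "i \<in> {i. label F z < i \<and> i \<le> js \<and> hon_idx w i}" using jsmax[of i] unfolding Hs_def by auto
    qed
    then have "depth F z + card Hs \<le> depth F cs"
      using honest_depth[OF Fk zv zh cs(1)] cs hjs jsz by simp
    moreover have "depth F cs \<le> depth F t" using height_ge[OF T cs(1)] dt by simp
    ultimately have "card Hs \<le> iz" using dz izd by simp
    then show False using cc2 catc by simp
  qed
qed

lemma catalan_not_balanced:
  assumes cat: "catalan w h" and mh: "m < h"
  shows "\<not> balanced w m F"
proof
  assume "balanced w m F"
  then obtain t1 t2 where Fk: "is_fork w F" and t: "t1 \<in> verts F" "t2 \<in> verts F"
    and dj: "disjoint_over m F t1 t2" and d: "depth F t1 = height F" "depth F t2 = height F"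
    unfolding balanced_def by blast
  have T: "is_tree F" using Fk is_fork_tree by blast
  obtain i1 where i1: "i1 \<le> depth F t1" "label F ((parent F ^^ i1) t1) = h"
    using tine_hits[OF Fk t(1) d(1) cat] by blast
  obtain i2 where i2: "i2 \<le> depth F t2" "label F ((parent F ^^ i2) t2) = h"
    using tine_hits[OF Fk t(2) d(2) cat] by blast
  have hh: "hon_idx w h" using cat unfolding catalan_def by simp
  have v1: "(parent F ^^ i1) t1 \<in> verts F" using funpow_in_verts[OF T t(1) i1(1)] .
  have v2: "(parent F ^^ i2) t2 \<in> verts F" using funpow_in_verts[OF T t(2) i2(1)] .
  have eq: "(parent F ^^ i1) t1 = (parent F ^^ i2) t2"
    using hon_vertex[OF Fk hh] v1 v2 i1 i2 by blast
  have "(parent F ^^ i1) t1 \<in> tine_verts F t1 \<inter> tine_verts F t2"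
    unfolding tine_verts_def using i1 i2 eq by blast
  moreover have "(parent F ^^ i1) t1 \<noteq> 0"
  proof
    assume "(parent F ^^ i1) t1 = 0"
    then show False using i1 label_root[OF Fk] hon_pos[OF hh] by simp
  qed
  ultimately have "label F ((parent F ^^ i1) t1) \<le> m" using dj unfolding disjoint_over_def by blast
  then show False using i1 mh by simp
qed



definition pairset :: "bool list \<Rightarrow> nat \<Rightarrow> fork \<Rightarrow> int set" where
  "pairset w m F = {min (reach w F t1) (reach w F t2) | t1 t2.
       t1 \<in> verts F \<and> t2 \<in> verts F \<and> disjoint_over m F t1 t2}"

lemma mu_fork_pairset: "mu_fork w m F = Max (pairset w m F)"
  unfolding mu_fork_def pairset_def by simp

lemma pairset_finite: assumes "is_tree F" shows "finite (pairset w m F)"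
proof -
  have f: "finite (verts F)" using assms unfolding is_tree_def by simp
  have "pairset w m F \<subseteq> (\<lambda>(a, b). min (reach w F a) (reach w F b)) ` (verts F \<times> verts F)"
    unfolding pairset_def by auto
  then show ?thesis using f finite_subset by blast
qed

lemma disjoint_root: "disjoint_over m F 0 0"
  unfolding disjoint_over_def by simp

lemma pairset_ne: assumes "is_tree F" shows "pairset w m F \<noteq> {}"
proof -
  have "0 \<in> verts F" using assms unfolding is_tree_def by simp
  then have "min (reach w F 0) (reach w F 0) \<in> pairset w m F"
    unfolding pairset_def using disjoint_root by blast
  then show ?thesis by blast
qed

lemma mu_fork_ge:
  assumes "is_tree F" "t1 \<in> verts F" "t2 \<in> verts F" "disjoint_over m F t1 t2"
  shows "min (reach w F t1) (reach w F t2) \<le> mu_fork w m F"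
proof -
  have "min (reach w F t1) (reach w F t2) \<in> pairset w m F"
    unfolding pairset_def using assms by blast
  then show ?thesis unfolding mu_fork_pairset using pairset_finite[OF assms(1)] by simp
qed

lemma mu_fork_attained:
  assumes "is_tree F"
  shows "\<exists>t1\<in>verts F. \<exists>t2\<in>verts F. disjoint_over m F t1 t2 \<and> mu_fork w m F = min (reach w F t1) (reach w F t2)"
proof -
  have "Max (pairset w m F) \<in> pairset w m F"
    using pairset_finite[OF assms] pairset_ne[OF assms] by (rule Max_in)
  then show ?thesis unfolding mu_fork_pairset pairset_def by blast
qed

lemma reserve_bounds: "0 \<le> reserve w F t \<and> reserve w F t \<le> int (length w)"
proof -
  have "{i. adv_idx w i \<and> i > label F t} \<subseteq> {1..length w}" unfolding adv_idx_def by auto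
  then have "card {i. adv_idx w i \<and> i > label F t} \<le> length w"
    using card_mono[of "{1..length w}"] by fastforce
  then show ?thesis unfolding reserve_def by simp
qed

lemma reach_bounds:
  assumes Fk: "is_fork w F" and t: "t \<in> verts F"
  shows "- int (length w) \<le> reach w F t \<and> reach w F t \<le> int (length w)"
proof -
  have T: "is_tree F" using Fk is_fork_tree by blast
  have "depth F t \<le> height F" using height_ge[OF T t] .
  moreover have "height F \<le> length w" using height_le_len[OF Fk] .
  ultimately show ?thesis unfolding reach_def gap_def using reserve_bounds[of w F t] by simp
qed

lemma mu_fork_bounds:
  assumes Fk: "is_fork w F"
  shows "- int (length w) \<le> mu_fork w m F \<and> mu_fork w m F \<le> int (length w)"
proof -
  have T: "is_tree F" using Fk is_fork_tree by blast
  obtain t1 t2 where t: "t1 \<in> verts F" "t2 \<in> verts F"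
    and e: "mu_fork w m F = min (reach w F t1) (reach w F t2)"
    using mu_fork_attained[OF T] by blast
  show ?thesis using e reach_bounds[OF Fk t(1)] reach_bounds[OF Fk t(2)] by linarith
qed

section \<open>The honest chain: a closed fork always exists\<close>

definition hparent :: "bool list \<Rightarrow> nat \<Rightarrow> nat" where
  "hparent w i = (if {j. j < i \<and> hon_idx w j} = {} then 0 else Max {j. j < i \<and> hon_idx w j})"

definition hchain :: "bool list \<Rightarrow> fork" where
  "hchain w = \<lparr>verts = insert 0 {i. hon_idx w i}, parent = hparent w, label = id\<rparr>"

lemma hparent_less: "0 < i \<Longrightarrow> hparent w i < i"
proof -
  assume i: "0 < i"
  show ?thesis
  proof (cases "{j. j < i \<and> hon_idx w j} = {}")
    case False
    have "finite {j. j < i \<and> hon_idx w j}" by simp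
    then have "Max {j. j < i \<and> hon_idx w j} \<in> {j. j < i \<and> hon_idx w j}" using False by (rule Max_in)
    then show ?thesis unfolding hparent_def if_not_P[OF False] by simp
  qed (simp add: hparent_def i)
qed

lemma hparent_zero[simp]: "hparent w 0 = 0"
  unfolding hparent_def by simp

lemma hparent_in: "hparent w i \<in> insert 0 {i. hon_idx w i}"
proof (cases "{j. j < i \<and> hon_idx w j} = {}")
  case False
  have "finite {j. j < i \<and> hon_idx w j}" by simp
  then have "Max {j. j < i \<and> hon_idx w j} \<in> {j. j < i \<and> hon_idx w j}" using False by (rule Max_in)
  then show ?thesis unfolding hparent_def if_not_P[OF False] by simp
qed (simp add: hparent_def)

lemma hparent_reach: "v \<le> n \<Longrightarrow> (hparent w ^^ n) v = 0"
proof (induction n arbitrary: v)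
  case 0 then show ?case by simp
next
  case (Suc n)
  have "hparent w v \<le> n"
    using hparent_less[of v w] Suc.prems by (cases "v = 0") auto
  then show ?case using Suc.IH by (simp add: funpow_Suc_right del: funpow.simps)
qed

lemma hchain_tree: "is_tree (hchain w)"
proof -
  have "finite {i. hon_idx w i}"
    by (rule finite_subset[of _ "{..length w}"]) (auto simp: hon_idx_def)
  moreover have "\<exists>n. (hparent w ^^ n) v = 0" for v using hparent_reach[of v v w] by blast
  ultimately show ?thesis
    unfolding is_tree_def hchain_def using hparent_in by auto
qed

lemma hchain_depth_mono:
  assumes hv: "hon_idx w v"
  shows "hon_idx w u \<Longrightarrow> u < v \<Longrightarrow> depth (hchain w) u < depth (hchain w) v"
  using hv
proof (induction v arbitrary: u rule: less_induct)
  case (less v)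
  let ?F = "hchain w"
  have T: "is_tree ?F" by (rule hchain_tree)
  have vv: "v \<in> verts ?F" and vnz: "v \<noteq> 0" using less.prems hon_pos[of w v] unfolding hchain_def by auto
  have dv: "depth ?F v = Suc (depth ?F (hparent w v))"
    using depth_parent[OF T vv vnz] unfolding hchain_def by simp
  have ne: "{j. j < v \<and> hon_idx w j} \<noteq> {}" using less.prems by auto
  have fin: "finite {j. j < v \<and> hon_idx w j}" by simp
  have pin: "hparent w v \<in> {j. j < v \<and> hon_idx w j}"
    unfolding hparent_def if_not_P[OF ne] using Max_in[OF fin ne] .
  have ule: "u \<le> hparent w v"
    unfolding hparent_def if_not_P[OF ne] using Max_ge[OF fin, of u] less.prems by simp
  show ?case
  proof (cases "u = hparent w v")
    case True then show ?thesis using dv by simp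
  next
    case False
    then have "u < hparent w v" using ule by simp
    then have "depth ?F u < depth ?F (hparent w v)" using less.IH[of "hparent w v" u] pin less.prems by simp
    then show ?thesis using dv by simp
  qed
qed

lemma hchain_closed: "closed_fork w (hchain w)"
proof -
  let ?F = "hchain w"
  have T: "is_tree ?F" by (rule hchain_tree)
  have fk: "is_fork w ?F"
    unfolding is_fork_def
  proof (intro conjI ballI allI impI)
    show "is_tree ?F" by (rule T)
    show "label ?F 0 = 0" unfolding hchain_def by simp
  next
    fix v assume "v \<in> verts ?F" then show "label ?F v \<le> length w"
      unfolding hchain_def hon_idx_def by auto
  next
    fix v assume "v \<in> verts ?F - {0}" then show "label ?F (parent ?F v) < label ?F v"
      unfolding hchain_def using hparent_less by auto
  next
    fix i assume "hon_idx w i" then show "\<exists>!v. v \<in> verts ?F \<and> label ?F v = i"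
      unfolding hchain_def by auto
  next
    fix u v assume "u \<in> verts ?F" "v \<in> verts ?F"
      "hon_idx w (label ?F u) \<and> hon_idx w (label ?F v) \<and> label ?F u < label ?F v"
    then show "depth ?F u < depth ?F v" using hchain_depth_mono[of w v u] unfolding hchain_def by simp
  qed
  show ?thesis unfolding closed_fork_def
  proof (intro conjI allI impI)
    show "is_fork w ?F" by (rule fk)
  next
    fix v assume "is_leaf ?F v"
    then have "v \<in> verts ?F" unfolding is_leaf_def by simp
    then show "honest_vertex w ?F v" unfolding honest_vertex_def hchain_def by auto
  qed
qed

definition muset :: "bool list \<Rightarrow> bool list \<Rightarrow> int set" where
  "muset x y = {mu_fork (x @ y) (length x) F | F. closed_fork (x @ y) F}"

lemma mu_muset: "mu x y = Max (muset x y)"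
  unfolding mu_def muset_def by simp

lemma muset_finite: "finite (muset x y)"
proof -
  have "muset x y \<subseteq> {- int (length (x @ y)) .. int (length (x @ y))}"
    unfolding muset_def closed_fork_def using mu_fork_bounds by fastforce
  then show ?thesis using finite_subset by blast
qed

lemma muset_ne: "muset x y \<noteq> {}"
  unfolding muset_def using hchain_closed by blast

lemma mu_ge: "closed_fork (x @ y) F \<Longrightarrow> mu_fork (x @ y) (length x) F \<le> mu x y"
  unfolding mu_muset using muset_finite by (auto simp: muset_def intro!: Max_ge)

lemma mu_attained: "\<exists>F. closed_fork (x @ y) F \<and> mu x y = mu_fork (x @ y) (length x) F"
proof -
  have "Max (muset x y) \<in> muset x y" using muset_finite muset_ne by (rule Max_in)
  then show ?thesis unfolding mu_muset muset_def by blast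
qed

section \<open>Balanced forks give nonnegative mu\<close>

lemma depth_verts_upd[simp]: "depth (F\<lparr>verts := V\<rparr>) = depth F"
  unfolding depth_def by (simp add: fun_eq_iff)

lemma tine_verts_verts_upd[simp]: "tine_verts (F\<lparr>verts := V\<rparr>) = tine_verts F"
  unfolding tine_verts_def by (simp add: fun_eq_iff)

lemma tine_verts_funpow:
  assumes T: "is_tree F" and v: "v \<in> verts F" and i: "i \<le> depth F v"
  shows "tine_verts F ((parent F ^^ i) v) \<subseteq> tine_verts F v"
proof
  fix x assume "x \<in> tine_verts F ((parent F ^^ i) v)"
  then obtain j where j: "j \<le> depth F ((parent F ^^ i) v)" "x = (parent F ^^ j) ((parent F ^^ i) v)"
    unfolding tine_verts_def by blast
  have "x = (parent F ^^ (j + i)) v" using j(2) by (simp add: funpow_add)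
  moreover have "j + i \<le> depth F v" using j(1) depth_funpow[OF T v i] i by simp
  ultimately show "x \<in> tine_verts F v" unfolding tine_verts_def by blast
qed

lemma self_in_tine: "v \<in> tine_verts F v"
  unfolding tine_verts_def by (auto intro: exI[of _ 0])

lemma truncate_tine:
  assumes Fk: "is_fork w F" and t: "t \<in> verts F"
  shows "\<exists>z. z \<in> verts F \<and> honest_vertex w F z \<and> tine_verts F z \<subseteq> tine_verts F t \<and>
     depth F z \<le> depth F t \<and>
     depth F t - depth F z \<le> card {i. adv_idx w i \<and> label F z < i}"
proof -
  have T: "is_tree F" using Fk is_fork_tree by blast
  define a where "a i = (parent F ^^ i) t" for i
  define Z where "Z = {i. i \<le> depth F t \<and> (a i = 0 \<or> hon_idx w (label F (a i)))}"
  have aD: "a (depth F t) = 0" unfolding a_def using depth_reach[OF T t] .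
  have "depth F t \<in> Z" unfolding Z_def using aD by simp
  then have Zne: "Z \<noteq> {}" by blast
  have fZ: "finite Z" unfolding Z_def by auto
  define iz where "iz = Min Z"
  have izZ: "iz \<in> Z" unfolding iz_def using fZ Zne by (rule Min_in)
  have izmin: "\<And>i. i \<in> Z \<Longrightarrow> iz \<le> i" unfolding iz_def using fZ by simp
  define z where "z = a iz"
  have izd: "iz \<le> depth F t" and zh: "z = 0 \<or> hon_idx w (label F z)"
    using izZ unfolding Z_def z_def by auto
  have zv: "z \<in> verts F" unfolding z_def a_def using funpow_in_verts[OF T t izd] .
  have dz: "depth F z = depth F t - iz" unfolding z_def a_def using depth_funpow[OF T t izd] .
  have adv: "\<And>i. 0 \<le> i \<Longrightarrow> i < iz \<Longrightarrow> adv_idx w (label F ((parent F ^^ i) t))"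
  proof -
    fix i assume i: "0 \<le> i" "i < iz"
    have "i \<notin> Z" using izmin[of i] i by auto
    moreover have id: "i \<le> depth F t" using i izd by simp
    ultimately have "\<not> hon_idx w (label F (a i))" "a i \<noteq> 0" unfolding Z_def by auto
    then show "adv_idx w (label F ((parent F ^^ i) t))"
      using nonroot_hon_or_adv[OF Fk funpow_in_verts[OF T t id]] unfolding a_def by blast
  qed
  have cc: "iz - 0 \<le> card {j. label F ((parent F ^^ iz) t) < j \<and> j \<le> label F ((parent F ^^ 0) t) \<and> adv_idx w j}"
    using chain_count[OF Fk t le0 izd adv] by simp
  have "{j. label F ((parent F ^^ iz) t) < j \<and> j \<le> label F ((parent F ^^ 0) t) \<and> adv_idx w j}
      \<subseteq> {i. adv_idx w i \<and> label F z < i}" unfolding z_def a_def by auto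
  then have "card {j. label F ((parent F ^^ iz) t) < j \<and> j \<le> label F ((parent F ^^ 0) t) \<and> adv_idx w j}
      \<le> card {i. adv_idx w i \<and> label F z < i}"
    by (rule card_mono[rotated]) (rule finite_subset[of _ "{..length w}"], auto simp: adv_idx_def)
  then have "iz \<le> card {i. adv_idx w i \<and> label F z < i}" using cc by linarith
  moreover have "tine_verts F z \<subseteq> tine_verts F t" unfolding z_def a_def by (rule tine_verts_funpow[OF T t izd])
  ultimately show ?thesis using zv zh dz unfolding honest_vertex_def by (intro exI[of _ z]) auto
qed

definition trim :: "bool list \<Rightarrow> fork \<Rightarrow> fork" where
  "trim w F = F\<lparr>verts := {v \<in> verts F. \<exists>u\<in>verts F. honest_vertex w F u \<and> v \<in> tine_verts F u}\<rparr>"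

lemma trim_simps[simp]: "parent (trim w F) = parent F" "label (trim w F) = label F"
   "depth (trim w F) = depth F" "tine_verts (trim w F) = tine_verts F"
  unfolding trim_def by simp_all

lemma trim_verts: "verts (trim w F) = {v \<in> verts F. \<exists>u\<in>verts F. honest_vertex w F u \<and> v \<in> tine_verts F u}"
  unfolding trim_def by simp

lemma trim_closed:
  assumes Fk: "is_fork w F"
  shows "closed_fork w (trim w F)"
proof -
  let ?G = "trim w F"
  have T: "is_tree F" using Fk is_fork_tree by blast
  have sub: "verts ?G \<subseteq> verts F" unfolding trim_verts by auto
  have T0: "0 \<in> verts F" and Tp: "\<And>v. v \<in> verts F - {0} \<Longrightarrow> parent F v \<in> verts F"
    and Tf: "finite (verts F)" using T unfolding is_tree_def by auto
  have F2: "\<And>v. v \<in> verts F \<Longrightarrow> label F v \<le> length w"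
    and F1: "\<And>v. v \<in> verts F - {0} \<Longrightarrow> label F (parent F v) < label F v"
    and F4: "\<And>u v. u \<in> verts F \<Longrightarrow> v \<in> verts F \<Longrightarrow> hon_idx w (label F u) \<Longrightarrow> hon_idx w (label F v)
        \<Longrightarrow> label F u < label F v \<Longrightarrow> depth F u < depth F v"
    using Fk unfolding is_fork_def by blast+
  have hon_in: "\<And>u. u \<in> verts F \<Longrightarrow> honest_vertex w F u \<Longrightarrow> u \<in> verts ?G"
    unfolding trim_verts using self_in_tine by blast
  have zero: "0 \<in> verts ?G" using hon_in[OF T0] unfolding honest_vertex_def by simp
  have par: "parent F v \<in> verts ?G" if v: "v \<in> verts ?G - {0}" for v
  proof -
    obtain u where u: "u \<in> verts F" "honest_vertex w F u" "v \<in> tine_verts F u"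
      using v unfolding trim_verts by blast
    obtain i where i: "i \<le> depth F u" "v = (parent F ^^ i) u" using u(3) unfolding tine_verts_def by blast
    have "i \<noteq> depth F u" using depth_reach[OF T u(1)] i v by auto
    then have "Suc i \<le> depth F u" using i by simp
    then have "parent F v \<in> tine_verts F u" unfolding tine_verts_def using i by (intro CollectI exI[of _ "Suc i"]) simp
    moreover have "parent F v \<in> verts F" using v sub Tp by blast
    ultimately show ?thesis unfolding trim_verts using u by blast
  qed
  have TG: "is_tree ?G"
    unfolding is_tree_def
  proof (intro conjI)
    show "finite (verts ?G)" using Tf sub finite_subset by blast
    show "0 \<in> verts ?G" by (rule zero)
  next
    show "\<forall>v\<in>verts ?G - {0}. parent ?G v \<in> verts ?G \<and> (\<exists>n. (parent ?G ^^ n) v = 0)"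
    proof
    fix v assume v: "v \<in> verts ?G - {0}"
    show "parent ?G v \<in> verts ?G \<and> (\<exists>n. (parent ?G ^^ n) v = 0)"
    proof
      show "parent ?G v \<in> verts ?G" using par[OF v] by simp
      have "v \<in> verts F - {0}" using v sub by auto
      then obtain n where "(parent F ^^ n) v = 0" using T unfolding is_tree_def by blast
      then show "\<exists>n. (parent ?G ^^ n) v = 0" by auto
    qed
    qed
  qed
  have fk: "is_fork w ?G"
    unfolding is_fork_def
  proof (intro conjI ballI allI impI)
    show "is_tree ?G" by (rule TG)
    show "label ?G 0 = 0" using label_root[OF Fk] by simp
  next
    fix v assume "v \<in> verts ?G" then show "label ?G v \<le> length w"
      using F2 sub by auto
  next
    fix v assume "v \<in> verts ?G - {0}" then show "label ?G (parent ?G v) < label ?G v"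
      using F1 sub by auto
  next
    fix i assume hi: "hon_idx w i"
    obtain v where v: "v \<in> verts F" "label F v = i" "\<And>v'. v' \<in> verts F \<and> label F v' = i \<Longrightarrow> v' = v"
      using hon_vertex[OF Fk hi] by blast
    have "v \<in> verts ?G" using hon_in[OF v(1)] hi v(2) unfolding honest_vertex_def by simp
    then show "\<exists>!v. v \<in> verts ?G \<and> label ?G v = i"
    proof (intro ex1I)
      show "v \<in> verts ?G \<and> label ?G v = i" using \<open>v \<in> verts ?G\<close> v(2) by simp
    next
      fix v' assume "v' \<in> verts ?G \<and> label ?G v' = i"
      then show "v' = v" using v(3)[of v'] sub by auto
    qed
  next
    fix u v assume a: "u \<in> verts ?G" "v \<in> verts ?G"
      "hon_idx w (label ?G u) \<and> hon_idx w (label ?G v) \<and> label ?G u < label ?G v"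
    have "u \<in> verts F" "v \<in> verts F" using a sub by auto
    then show "depth ?G u < depth ?G v" using F4[of u v] a by simp
  qed
  show ?thesis unfolding closed_fork_def
  proof (intro conjI allI impI)
    show "is_fork w ?G" by (rule fk)
  next
    fix v assume lf: "is_leaf ?G v"
    then have vG: "v \<in> verts ?G" unfolding is_leaf_def by simp
    show "honest_vertex w ?G v"
    proof (rule ccontr)
      assume nh: "\<not> honest_vertex w ?G v"
      obtain u where u: "u \<in> verts F" "honest_vertex w F u" "v \<in> tine_verts F u"
        using vG unfolding trim_verts by blast
      obtain i where i: "i \<le> depth F u" "v = (parent F ^^ i) u" using u(3) unfolding tine_verts_def by blast
      have "i \<noteq> 0"
      proof
        assume "i = 0" then show False using nh u(2) i unfolding honest_vertex_def by simp
      qed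
      then obtain j where j: "i = Suc j" by (cases i) auto
      define u' where "u' = (parent F ^^ j) u"
      have u'v: "parent F u' = v" using i j unfolding u'_def by simp
      have jd: "j \<le> depth F u" using i j by simp
      have u'nz: "u' \<noteq> 0" unfolding u'_def using depth_nonzero i j by simp
      have "u' \<in> tine_verts F u" unfolding tine_verts_def u'_def using jd by blast
      moreover have "u' \<in> verts F" unfolding u'_def using funpow_in_verts[OF T u(1) jd] .
      ultimately have "u' \<in> verts ?G" unfolding trim_verts using u by blast
      then show False using lf u'v u'nz unfolding is_leaf_def by auto
    qed
  qed
qed

lemma height_mono_sub:
  assumes "is_tree G" "is_tree F" "verts G \<subseteq> verts F" "depth G = depth F"
  shows "height G \<le> height F"
proof -
  obtain v where "v \<in> verts G" "depth G v = height G" using height_attained[OF assms(1)] by blast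
  then show ?thesis using height_ge[OF assms(2)] assms(3,4) by force
qed

lemma balanced_mu_fork:
  assumes bal: "balanced w m F"
  shows "\<exists>G. closed_fork w G \<and> 0 \<le> mu_fork w m G"
proof -
  obtain t1 t2 where Fk: "is_fork w F" and t: "t1 \<in> verts F" "t2 \<in> verts F"
    and dj: "disjoint_over m F t1 t2" and d: "depth F t1 = height F" "depth F t2 = height F"
    using bal unfolding balanced_def by blast
  let ?G = "trim w F"
  have T: "is_tree F" using Fk is_fork_tree by blast
  have cG: "closed_fork w ?G" using trim_closed[OF Fk] .
  have TG: "is_tree ?G" using cG unfolding closed_fork_def is_fork_def by simp
  have sub: "verts ?G \<subseteq> verts F" unfolding trim_verts by auto
  have hle: "height ?G \<le> height F" using height_mono_sub[OF TG T sub] by simp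
  have good: "\<exists>z. z \<in> verts ?G \<and> tine_verts ?G z \<subseteq> tine_verts F t \<and> 0 \<le> reach w ?G z"
    if tv: "t \<in> verts F" and dt: "depth F t = height F" for t
  proof -
    obtain z where z: "z \<in> verts F" "honest_vertex w F z" "tine_verts F z \<subseteq> tine_verts F t"
      "depth F z \<le> depth F t" "depth F t - depth F z \<le> card {i. adv_idx w i \<and> label F z < i}"
      using truncate_tine[OF Fk tv] by blast
    have zG: "z \<in> verts ?G" unfolding trim_verts using z(1,2) self_in_tine by blast
    have "depth F z \<le> height ?G" using height_ge[OF TG zG] by simp
    then have "0 \<le> reach w ?G z"
      unfolding reach_def gap_def reserve_def using z(4,5) hle dt by simp
    then show ?thesis using zG z(3) by auto
  qed
  obtain z1 where z1: "z1 \<in> verts ?G" "tine_verts ?G z1 \<subseteq> tine_verts F t1" "0 \<le> reach w ?G z1"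
    using good[OF t(1) d(1)] by blast
  obtain z2 where z2: "z2 \<in> verts ?G" "tine_verts ?G z2 \<subseteq> tine_verts F t2" "0 \<le> reach w ?G z2"
    using good[OF t(2) d(2)] by blast
  have "disjoint_over m ?G z1 z2" using dj z1(2) z2(2) unfolding disjoint_over_def by auto
  then have "min (reach w ?G z1) (reach w ?G z2) \<le> mu_fork w m ?G"
    using mu_fork_ge[OF TG z1(1) z2(1)] by simp
  then show ?thesis using cG z1(3) z2(3) by (intro exI[of _ ?G]) auto
qed



section \<open>Extending forks by adversarial leaves\<close>

definition add_leaf :: "fork \<Rightarrow> nat \<Rightarrow> nat \<Rightarrow> nat \<Rightarrow> fork" where
  "add_leaf F x p l = F\<lparr>verts := insert x (verts F), parent := (parent F)(x := p), label := (label F)(x := l)\<rparr>"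

lemma add_leaf_simps[simp]:
  "verts (add_leaf F x p l) = insert x (verts F)"
  "parent (add_leaf F x p l) = (parent F)(x := p)"
  "label (add_leaf F x p l) = (label F)(x := l)"
  unfolding add_leaf_def by simp_all

lemma iter_agree:
  assumes T: "is_tree F" and v: "v \<in> verts F" and x: "x \<notin> verts F"
  shows "i \<le> depth F v \<Longrightarrow> (((parent F)(x := p)) ^^ i) v = (parent F ^^ i) v"
proof (induction i)
  case 0 then show ?case by simp
next
  case (Suc i)
  have "(parent F ^^ i) v \<in> verts F" using funpow_in_verts[OF T v] Suc.prems by simp
  then have "(parent F ^^ i) v \<noteq> x" using x by auto
  then show ?case using Suc by simp
qed

lemma depth_agree_le:
  assumes T: "is_tree F" and v: "v \<in> verts F" and x: "x \<notin> verts F"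
    and z: "(((parent F)(x := p)) ^^ n) v = 0"
  shows "depth F v \<le> n"
proof (rule ccontr)
  assume "\<not> depth F v \<le> n"
  then have n: "n < depth F v" by simp
  then have "(((parent F)(x := p)) ^^ n) v = (parent F ^^ n) v" using iter_agree[OF T v x] by simp
  then show False using z depth_nonzero[OF n] by simp
qed

lemma add_leaf_props:
  assumes Fk: "is_fork w F" and p: "p \<in> verts F" and x: "x \<notin> verts F"
    and l: "adv_idx w l" and pl: "label F p < l"
  defines "G \<equiv> add_leaf F x p l"
  shows "is_fork w G"
    and "\<And>v. v \<in> verts F \<Longrightarrow> depth G v = depth F v \<and> tine_verts G v = tine_verts F v \<and> label G v = label F v"
    and "depth G x = Suc (depth F p)"
    and "tine_verts G x = insert x (tine_verts F p)"
    and "label G x = l"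
proof -
  have T: "is_tree F" using Fk is_fork_tree by blast
  have T0: "0 \<in> verts F" and Tp: "\<And>v. v \<in> verts F - {0} \<Longrightarrow> parent F v \<in> verts F"
    and Tf: "finite (verts F)" using T unfolding is_tree_def by auto
  have F2: "\<And>v. v \<in> verts F \<Longrightarrow> label F v \<le> length w"
    and F1: "\<And>v. v \<in> verts F - {0} \<Longrightarrow> label F (parent F v) < label F v"
    and F4: "\<And>u v. u \<in> verts F \<Longrightarrow> v \<in> verts F \<Longrightarrow> hon_idx w (label F u) \<Longrightarrow> hon_idx w (label F v)
        \<Longrightarrow> label F u < label F v \<Longrightarrow> depth F u < depth F v"
    using Fk unfolding is_fork_def by blast+
  have x0: "x \<noteq> 0" using x T0 by (metis)
  let ?P = "(parent F)(x := p)"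
  have dv: "depth G v = depth F v" if v: "v \<in> verts F" for v
  proof -
    have "(LEAST n. (?P ^^ n) v = 0) = depth F v"
    proof (rule Least_equality)
      show "(?P ^^ depth F v) v = 0" using iter_agree[OF T v x] depth_reach[OF T v] by simp
      show "\<And>y. (?P ^^ y) v = 0 \<Longrightarrow> depth F v \<le> y" using depth_agree_le[OF T v x] by blast
    qed
    then show ?thesis unfolding G_def depth_def by simp
  qed
  have tv: "tine_verts G v = tine_verts F v" if v: "v \<in> verts F" for v
  proof -
    have "{(?P ^^ i) v | i. i \<le> depth F v} = {(parent F ^^ i) v | i. i \<le> depth F v}"
    proof (intro set_eqI iffI)
      fix u assume "u \<in> {(?P ^^ i) v | i. i \<le> depth F v}"
      then obtain i where "i \<le> depth F v" "u = (?P ^^ i) v" by blast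
      then show "u \<in> {(parent F ^^ i) v | i. i \<le> depth F v}" using iter_agree[OF T v x, of i p] by auto
    next
      fix u assume "u \<in> {(parent F ^^ i) v | i. i \<le> depth F v}"
      then obtain i where "i \<le> depth F v" "u = (parent F ^^ i) v" by blast
      then show "u \<in> {(?P ^^ i) v | i. i \<le> depth F v}" using iter_agree[OF T v x, of i p] by (intro CollectI exI[of _ i]) simp
    qed
    then show ?thesis unfolding tine_verts_def dv[OF v] unfolding G_def by simp
  qed
  have lv: "label G v = label F v" if v: "v \<in> verts F" for v
    unfolding G_def using v x by auto
  show "\<And>v. v \<in> verts F \<Longrightarrow> depth G v = depth F v \<and> tine_verts G v = tine_verts F v \<and> label G v = label F v"
    using dv tv lv by blast
  have sucx: "(?P ^^ Suc n) x = (?P ^^ n) p" for n by (simp add: funpow_Suc_right del: funpow.simps)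
  have dx: "depth G x = Suc (depth F p)"
  proof -
    have "(LEAST n. (?P ^^ n) x = 0) = Suc (depth F p)"
    proof (rule Least_equality)
      show "(?P ^^ Suc (depth F p)) x = 0" unfolding sucx using iter_agree[OF T p x] depth_reach[OF T p] by simp
    next
      fix y assume y: "(?P ^^ y) x = 0"
      show "Suc (depth F p) \<le> y"
      proof (cases y)
        case 0 then show ?thesis using y x0 by simp
      next
        case (Suc y')
        then have "(?P ^^ y') p = 0" using y sucx by simp
        then show ?thesis using depth_agree_le[OF T p x] Suc by simp
      qed
    qed
    then show ?thesis unfolding G_def depth_def by simp
  qed
  show "depth G x = Suc (depth F p)" by (rule dx)
  show "tine_verts G x = insert x (tine_verts F p)"
  proof (intro set_eqI iffI)
    fix u assume "u \<in> tine_verts G x"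
    then obtain i where i: "i \<le> Suc (depth F p)" "u = (?P ^^ i) x"
      unfolding tine_verts_def dx unfolding G_def by auto
    show "u \<in> insert x (tine_verts F p)"
    proof (cases i)
      case 0 then show ?thesis using i by simp
    next
      case (Suc j)
      then have "u = (parent F ^^ j) p" using i sucx iter_agree[OF T p x, of j] by simp
      then show ?thesis unfolding tine_verts_def using i Suc by auto
    qed
  next
    fix u assume u: "u \<in> insert x (tine_verts F p)"
    show "u \<in> tine_verts G x"
    proof (cases "u = x")
      case True
      then show ?thesis unfolding tine_verts_def G_def by (auto intro: exI[of _ 0])
    next
      case False
      then obtain j where j: "j \<le> depth F p" "u = (parent F ^^ j) p" using u unfolding tine_verts_def by auto
      then have "u = (?P ^^ Suc j) x" using sucx iter_agree[OF T p x, of j] by simp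
      then show ?thesis unfolding tine_verts_def dx unfolding G_def using j by (intro CollectI exI[of _ "Suc j"]) simp
    qed
  qed
  show "label G x = l" unfolding G_def by simp
  have pG: "parent G = ?P" unfolding G_def by simp
  have TG: "is_tree G"
    unfolding is_tree_def
  proof (intro conjI)
    show "finite (verts G)" using Tf unfolding G_def by simp
    show "0 \<in> verts G" using T0 unfolding G_def by simp
    show "\<forall>v\<in>verts G - {0}. parent G v \<in> verts G \<and> (\<exists>n. (parent G ^^ n) v = 0)"
    proof
      fix v assume v: "v \<in> verts G - {0}"
      show "parent G v \<in> verts G \<and> (\<exists>n. (parent G ^^ n) v = 0)"
      proof (cases "v = x")
        case True
        have e: "(?P ^^ Suc (depth F p)) x = 0" unfolding sucx using iter_agree[OF T p x] depth_reach[OF T p] by simp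
        have "parent G v \<in> verts G" using True p unfolding pG by (simp add: G_def)
        moreover have "\<exists>n. (parent G ^^ n) v = 0" unfolding pG True using e by blast
        ultimately show ?thesis by blast
      next
        case False
        then have vF: "v \<in> verts F - {0}" using v unfolding G_def by simp
        have vF': "v \<in> verts F" using vF by simp
        have e: "(?P ^^ depth F v) v = 0" using iter_agree[OF T vF' x] depth_reach[OF T vF'] by simp
        have "parent G v \<in> verts G" using Tp[OF vF] False unfolding pG by (simp add: G_def)
        moreover have "\<exists>n. (parent G ^^ n) v = 0" unfolding pG using e by blast
        ultimately show ?thesis by blast
      qed
    qed
  qed
  show "is_fork w G"
    unfolding is_fork_def
  proof (intro conjI ballI allI impI)
    show "is_tree G" by (rule TG)
    show "label G 0 = 0" using label_root[OF Fk] x0 unfolding G_def by simp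
  next
    fix v assume v: "v \<in> verts G"
    show "label G v \<le> length w"
    proof (cases "v = x")
      case True then show ?thesis using l unfolding G_def adv_idx_def by simp
    next
      case False then show ?thesis using v F2 unfolding G_def by simp
    qed
  next
    fix v assume v: "v \<in> verts G - {0}"
    show "label G (parent G v) < label G v"
    proof (cases "v = x")
      case True then show ?thesis using pl p x unfolding G_def by auto
    next
      case False
      then have vF: "v \<in> verts F - {0}" using v unfolding G_def by simp
      have "parent F v \<noteq> x" using Tp[OF vF] x by auto
      then show ?thesis using F1[OF vF] False unfolding G_def by simp
    qed
  next
    fix i assume hi: "hon_idx w i"
    obtain v where v: "v \<in> verts F" "label F v = i" "\<And>v'. v' \<in> verts F \<and> label F v' = i \<Longrightarrow> v' = v"
      using hon_vertex[OF Fk hi] by blast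
    show "\<exists>!v. v \<in> verts G \<and> label G v = i"
    proof (intro ex1I)
      show "v \<in> verts G \<and> label G v = i" using v(1,2) lv[OF v(1)] unfolding G_def by simp
    next
      fix v' assume v': "v' \<in> verts G \<and> label G v' = i"
      show "v' = v"
      proof (cases "v' = x")
        case True
        then have "i = l" using v' unfolding G_def by simp
        then show ?thesis using hi l hon_adv_excl by blast
      next
        case False
        then have "v' \<in> verts F" "label F v' = i" using v' unfolding G_def by auto
        then show ?thesis using v(3) by blast
      qed
    qed
  next
    fix u v assume a: "u \<in> verts G" "v \<in> verts G"
      "hon_idx w (label G u) \<and> hon_idx w (label G v) \<and> label G u < label G v"
    have "u \<noteq> x"
    proof
      assume "u = x" then have "hon_idx w l" using a(3) by (simp add: G_def)
      then show False using l hon_adv_excl by blast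
    qed
    moreover have "v \<noteq> x"
    proof
      assume "v = x" then have "hon_idx w l" using a(3) by (simp add: G_def)
      then show False using l hon_adv_excl by blast
    qed
    ultimately have uv: "u \<in> verts F" "v \<in> verts F" using a(1,2) unfolding G_def by auto
    then show "depth G u < depth G v" using F4[of u v] a dv lv by simp
  qed
qed

lemma fresh_vertex: "is_tree F \<Longrightarrow> Suc (Max (verts F)) \<notin> verts F"
  unfolding is_tree_def using Max_ge Suc_n_not_le_n by blast

lemma adv_finite: "finite {i. adv_idx w i \<and> a < i}"
  by (rule finite_subset[of _ "{..length w}"]) (auto simp: adv_idx_def)

lemma chain_ext:
  assumes Fk: "is_fork w F" and t: "t \<in> verts F"
  shows "g \<le> card {i. adv_idx w i \<and> label F t < i} \<Longrightarrow>
    \<exists>G. is_fork w G \<and> verts F \<subseteq> verts G \<and>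
      (\<forall>v\<in>verts F. depth G v = depth F v \<and> tine_verts G v = tine_verts F v \<and> label G v = label F v) \<and>
      (\<forall>v\<in>verts G - verts F. depth G v \<le> depth F t + g) \<and>
      (\<exists>e\<in>verts G. depth G e = depth F t + g \<and> tine_verts G e \<subseteq> tine_verts F t \<union> (verts G - verts F) \<and>
         card {i. adv_idx w i \<and> label F t < i} \<le> g + card {i. adv_idx w i \<and> label G e < i})"
proof (induction g)
  case 0
  show ?case
    by (rule exI[of _ F]) (use Fk t self_in_tine in auto)
next
  case (Suc g)
  then obtain G e where G: "is_fork w G" "verts F \<subseteq> verts G"
      "\<forall>v\<in>verts F. depth G v = depth F v \<and> tine_verts G v = tine_verts F v \<and> label G v = label F v"
      "\<forall>v\<in>verts G - verts F. depth G v \<le> depth F t + g"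
    and e: "e \<in> verts G" "depth G e = depth F t + g" "tine_verts G e \<subseteq> tine_verts F t \<union> (verts G - verts F)"
      "card {i. adv_idx w i \<and> label F t < i} \<le> g + card {i. adv_idx w i \<and> label G e < i}"
    by auto
  define A where "A = {i. adv_idx w i \<and> label G e < i}"
  have fA: "finite A" unfolding A_def by (rule adv_finite)
  have "card A \<ge> 1" using e(4) Suc.prems unfolding A_def by simp
  then have Ane: "A \<noteq> {}" by auto
  define l where "l = Min A"
  have lA: "l \<in> A" unfolding l_def using fA Ane by (rule Min_in)
  have lmin: "\<And>i. i \<in> A \<Longrightarrow> l \<le> i" unfolding l_def using fA by simp
  have "{i. adv_idx w i \<and> l < i} = A - {l}" unfolding A_def using lA lmin unfolding A_def by force
  then have cA: "card A = Suc (card {i. adv_idx w i \<and> l < i})" using fA lA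
    using card_Suc_Diff1[OF fA lA] by simp
  have TG: "is_tree G" using G(1) is_fork_tree by blast
  define x where "x = Suc (Max (verts G))"
  have x: "x \<notin> verts G" unfolding x_def using fresh_vertex[OF TG] .
  have la: "adv_idx w l" "label G e < l" using lA unfolding A_def by auto
  let ?H = "add_leaf G x e l"
  note P = add_leaf_props[OF G(1) e(1) x la]
  show ?case
  proof (rule exI[of _ ?H], intro conjI)
    show "is_fork w ?H" using P(1) .
    show "verts F \<subseteq> verts ?H" using G(2) by auto
  next
    show "\<forall>v\<in>verts F. depth ?H v = depth F v \<and> tine_verts ?H v = tine_verts F v \<and> label ?H v = label F v"
    proof
    fix v assume v: "v \<in> verts F"
    then have vG: "v \<in> verts G" using G(2) by auto
    show "depth ?H v = depth F v \<and> tine_verts ?H v = tine_verts F v \<and> label ?H v = label F v"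
      using P(2)[OF vG] G(3) v by simp
    qed
  next
    show "\<forall>v\<in>verts ?H - verts F. depth ?H v \<le> depth F t + Suc g"
    proof
    fix v assume v: "v \<in> verts ?H - verts F"
    show "depth ?H v \<le> depth F t + Suc g"
    proof (cases "v = x")
      case True then show ?thesis using P(3) e(2) by simp
    next
      case False
      then have "v \<in> verts G - verts F" using v by simp
      then have "depth G v \<le> depth F t + g" using G(4) by blast
      then show ?thesis using P(2)[of v] \<open>v \<in> verts G - verts F\<close> by simp
    qed
    qed
  next
    show "\<exists>e'\<in>verts ?H. depth ?H e' = depth F t + Suc g \<and> tine_verts ?H e' \<subseteq> tine_verts F t \<union> (verts ?H - verts F) \<and>
         card {i. adv_idx w i \<and> label F t < i} \<le> Suc g + card {i. adv_idx w i \<and> label ?H e' < i}"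
    proof (rule bexI[of _ x], intro conjI)
      show "depth ?H x = depth F t + Suc g" using P(3) e(2) by simp
      show "tine_verts ?H x \<subseteq> tine_verts F t \<union> (verts ?H - verts F)"
        using P(4) e(3) x G(2) by auto
      show "card {i. adv_idx w i \<and> label F t < i} \<le> Suc g + card {i. adv_idx w i \<and> label ?H x < i}"
        using P(5) e(4) cA unfolding A_def by simp
      show "x \<in> verts ?H" by simp
    qed
  qed
qed

lemma mu_fork_balanced:
  assumes cF: "closed_fork w F" and nn: "0 \<le> mu_fork w m F"
  shows "\<exists>G. balanced w m G"
proof -
  have Fk: "is_fork w F" using cF unfolding closed_fork_def by simp
  have T: "is_tree F" using Fk is_fork_tree by blast
  obtain t1 t2 where t: "t1 \<in> verts F" "t2 \<in> verts F" and dj: "disjoint_over m F t1 t2"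
    and e: "mu_fork w m F = min (reach w F t1) (reach w F t2)"
    using mu_fork_attained[OF T] by blast
  have r: "0 \<le> reach w F t1" "0 \<le> reach w F t2" using e nn by auto
  define g1 where "g1 = height F - depth F t1"
  define g2 where "g2 = height F - depth F t2"
  have h1: "depth F t1 + g1 = height F" unfolding g1_def using height_ge[OF T t(1)] by simp
  have h2: "depth F t2 + g2 = height F" unfolding g2_def using height_ge[OF T t(2)] by simp
  have c1: "g1 \<le> card {i. adv_idx w i \<and> label F t1 < i}"
    using r(1) h1 unfolding reach_def reserve_def gap_def by simp
  have c2: "g2 \<le> card {i. adv_idx w i \<and> label F t2 < i}"
    using r(2) h2 unfolding reach_def reserve_def gap_def by simp
  obtain G1 e1 where G1: "is_fork w G1" "verts F \<subseteq> verts G1"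
      "\<forall>v\<in>verts F. depth G1 v = depth F v \<and> tine_verts G1 v = tine_verts F v \<and> label G1 v = label F v"
      "\<forall>v\<in>verts G1 - verts F. depth G1 v \<le> depth F t1 + g1"
    and e1: "e1 \<in> verts G1" "depth G1 e1 = depth F t1 + g1" "tine_verts G1 e1 \<subseteq> tine_verts F t1 \<union> (verts G1 - verts F)"
    using chain_ext[OF Fk t(1) c1] by blast
  have t2G1: "t2 \<in> verts G1" using G1(2) t(2) by auto
  have c2': "g2 \<le> card {i. adv_idx w i \<and> label G1 t2 < i}" using c2 G1(3) t(2) by simp
  obtain G2 e2 where G2: "is_fork w G2" "verts G1 \<subseteq> verts G2"
      "\<forall>v\<in>verts G1. depth G2 v = depth G1 v \<and> tine_verts G2 v = tine_verts G1 v \<and> label G2 v = label G1 v"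
      "\<forall>v\<in>verts G2 - verts G1. depth G2 v \<le> depth G1 t2 + g2"
    and e2: "e2 \<in> verts G2" "depth G2 e2 = depth G1 t2 + g2" "tine_verts G2 e2 \<subseteq> tine_verts G1 t2 \<union> (verts G2 - verts G1)"
    using chain_ext[OF G1(1) t2G1 c2'] by blast
  have T2: "is_tree G2" using G2(1) is_fork_tree by blast
  have dt2: "depth G1 t2 = depth F t2" using G1(3) t(2) by simp
  have all_le: "depth G2 v \<le> height F" if v: "v \<in> verts G2" for v
  proof (cases "v \<in> verts G1")
    case True
    then have d: "depth G2 v = depth G1 v" using G2(3) by simp
    show ?thesis
    proof (cases "v \<in> verts F")
      case True then show ?thesis using d G1(3) height_ge[OF T] by simp
    next
      case False then show ?thesis using d G1(4) \<open>v \<in> verts G1\<close> h1 by simp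
    qed
  next
    case False then show ?thesis using G2(4) v dt2 h2 by simp
  qed
  have hG2: "height G2 = height F"
  proof (rule antisym)
    obtain v where "v \<in> verts G2" "depth G2 v = height G2" using height_attained[OF T2] by blast
    then show "height G2 \<le> height F" using all_le by metis
  next
    obtain v where v: "v \<in> verts F" "depth F v = height F" using height_attained[OF T] by blast
    then have "v \<in> verts G2" using G1(2) G2(2) by auto
    moreover have "depth G2 v = height F" using v G1(2,3) G2(3) by auto
    ultimately show "height F \<le> height G2" using height_ge[OF T2] by metis
  qed
  have de1: "depth G2 e1 = height G2" using G2(3) e1 h1 hG2 by simp
  have de2: "depth G2 e2 = height G2" using e2 dt2 h2 hG2 by simp
  have tF1: "tine_verts F t1 \<subseteq> verts F" using tine_verts_sub[OF T t(1)] .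
  have tF2: "tine_verts F t2 \<subseteq> verts F" using tine_verts_sub[OF T t(2)] .
  have dj2: "disjoint_over m G2 e1 e2"
    unfolding disjoint_over_def
  proof (intro ballI impI)
    fix u assume u: "u \<in> tine_verts G2 e1 \<inter> tine_verts G2 e2" and nz: "u \<noteq> 0"
    have u1: "u \<in> tine_verts F t1 \<union> (verts G1 - verts F)" using u G2(3) e1 by auto
    have u2: "u \<in> tine_verts F t2 \<union> (verts G2 - verts G1)" using u e2(3) G1(3) t(2) by auto
    have "u \<in> verts G1" using u1 tF1 G1(2) by auto
    then have "u \<in> tine_verts F t2" using u2 by auto
    then have uF: "u \<in> verts F" using tF2 by auto
    then have "u \<in> tine_verts F t1" using u1 by auto
    then have "label F u \<le> m" using dj nz \<open>u \<in> tine_verts F t2\<close> unfolding disjoint_over_def by auto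
    moreover have "label G2 u = label F u" using G2(3) G1(3) G1(2) uF by auto
    ultimately show "label G2 u \<le> m" by simp
  qed
  have "balanced w m G2" unfolding balanced_def
    using G2(1) e1(1) G2(2) e2(1) dj2 de1 de2 by blast
  then show ?thesis by blast
qed



lemma balanced_iff_mu:
  assumes "length x = m"
  shows "(\<exists>F. balanced (x @ y) m F) \<longleftrightarrow> 0 \<le> mu x y"
proof
  assume "\<exists>F. balanced (x @ y) m F"
  then obtain F where "balanced (x @ y) m F" by blast
  then obtain G where G: "closed_fork (x @ y) G" "0 \<le> mu_fork (x @ y) m G"
    using balanced_mu_fork by blast
  then show "0 \<le> mu x y" using mu_ge[OF G(1)] assms by simp
next
  assume a: "0 \<le> mu x y"
  obtain F where F: "closed_fork (x @ y) F" "mu x y = mu_fork (x @ y) (length x) F"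
    using mu_attained by blast
  then show "\<exists>F. balanced (x @ y) m F" using mu_fork_balanced[OF F(1)] a assms by simp
qed

section \<open>Walks\<close>

definition cA :: "bool list \<Rightarrow> nat \<Rightarrow> nat" where
  "cA w j = card {i. i \<le> j \<and> adv_idx w i}"
definition cH :: "bool list \<Rightarrow> nat \<Rightarrow> nat" where
  "cH w j = card {i. i \<le> j \<and> hon_idx w i}"
definition S :: "bool list \<Rightarrow> nat \<Rightarrow> int" where
  "S w j = int (cA w j) - int (cH w j)"

lemma adv_snoc: "adv_idx (p @ [b]) i \<longleftrightarrow> adv_idx p i \<or> (i = Suc (length p) \<and> b)"
  unfolding adv_idx_def by (auto simp: nth_append le_Suc_eq)
lemma hon_snoc: "hon_idx (p @ [b]) i \<longleftrightarrow> hon_idx p i \<or> (i = Suc (length p) \<and> \<not> b)"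
  unfolding hon_idx_def by (auto simp: nth_append le_Suc_eq)

lemma S_snoc_le: "j \<le> length p \<Longrightarrow> S (p @ [b]) j = S p j"
  unfolding S_def cA_def cH_def adv_snoc hon_snoc by (rule arg_cong2[where f="\<lambda>a b. int (card a) - int (card b)"]) auto

lemma card_le_insert:
  assumes "\<And>i. P i \<Longrightarrow> i \<le> n"
  shows "card {i. i \<le> Suc n \<and> (P i \<or> i = Suc n \<and> b)} = card {i. i \<le> n \<and> P i} + (if b then 1 else 0)"
proof -
  have f: "finite {i. i \<le> n \<and> P i}" by simp
  show ?thesis
  proof (cases b)
    case True
    then have "{i. i \<le> Suc n \<and> (P i \<or> i = Suc n \<and> b)} = insert (Suc n) {i. i \<le> n \<and> P i}"
      using assms by (auto simp: le_Suc_eq)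
    then show ?thesis using True f by simp
  next
    case False
    then have "{i. i \<le> Suc n \<and> (P i \<or> i = Suc n \<and> b)} = {i. i \<le> n \<and> P i}"
      using assms by (auto simp: le_Suc_eq)
    then show ?thesis using False by simp
  qed
qed

lemma S_snoc_last: "S (p @ [b]) (Suc (length p)) = S p (length p) + (if b then 1 else -1)"
proof -
  have a: "cA (p @ [b]) (Suc (length p)) = cA p (length p) + (if b then 1 else 0)"
    unfolding cA_def adv_snoc by (rule card_le_insert) (auto simp: adv_idx_def)
  have h: "cH (p @ [b]) (Suc (length p)) = cH p (length p) + (if \<not> b then 1 else 0)"
    unfolding cH_def hon_snoc by (rule card_le_insert) (auto simp: hon_idx_def)
  show ?thesis unfolding S_def a h by auto
qed

definition minS :: "bool list \<Rightarrow> int" where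
  "minS p = Min (S p ` {..length p})"

lemma minS_le: "j \<le> length p \<Longrightarrow> minS p \<le> S p j"
  unfolding minS_def by auto

lemma minS_attained: "\<exists>j\<le>length p. minS p = S p j"
proof -
  have "Min (S p ` {..length p}) \<in> S p ` {..length p}" by (rule Min_in) auto
  then obtain j where "j \<in> {..length p}" "Min (S p ` {..length p}) = S p j" by (rule imageE)
  then show ?thesis unfolding minS_def by auto
qed

lemma minS_snoc: "minS (p @ [b]) = min (minS p) (S (p @ [b]) (Suc (length p)))"
proof -
  have "S (p @ [b]) ` {..length (p @ [b])} = insert (S (p @ [b]) (Suc (length p))) (S p ` {..length p})"
  proof -
    have "{..length (p @ [b])} = insert (Suc (length p)) {..length p}" by auto
    moreover have "S (p @ [b]) ` {..length p} = S p ` {..length p}" using S_snoc_le by auto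
    ultimately show ?thesis by simp
  qed
  then have "minS (p @ [b]) = Min (insert (S (p @ [b]) (Suc (length p))) (S p ` {..length p}))"
    unfolding minS_def by simp
  also have "\<dots> = min (S (p @ [b]) (Suc (length p))) (Min (S p ` {..length p}))"
    by (rule Min_insert) auto
  finally show ?thesis unfolding minS_def by simp
qed

lemma cA_split:
  assumes "a \<le> c"
  shows "card {i. a < i \<and> i \<le> c \<and> adv_idx w i} = cA w c - cA w a"
proof -
  have "{i. i \<le> c \<and> adv_idx w i} = {i. i \<le> a \<and> adv_idx w i} \<union> {i. a < i \<and> i \<le> c \<and> adv_idx w i}"
    using assms by auto
  moreover have "{i. i \<le> a \<and> adv_idx w i} \<inter> {i. a < i \<and> i \<le> c \<and> adv_idx w i} = {}" by auto
  ultimately have "cA w c = cA w a + card {i. a < i \<and> i \<le> c \<and> adv_idx w i}"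
    unfolding cA_def using card_Un_disjoint[of "{i. i \<le> a \<and> adv_idx w i}" "{i. a < i \<and> i \<le> c \<and> adv_idx w i}"] by (simp add: finite_idx_set)
  then show ?thesis by simp
qed

lemma cH_split:
  assumes "a \<le> c"
  shows "card {i. a < i \<and> i \<le> c \<and> hon_idx w i} = cH w c - cH w a"
proof -
  have "{i. i \<le> c \<and> hon_idx w i} = {i. i \<le> a \<and> hon_idx w i} \<union> {i. a < i \<and> i \<le> c \<and> hon_idx w i}"
    using assms by auto
  moreover have "{i. i \<le> a \<and> hon_idx w i} \<inter> {i. a < i \<and> i \<le> c \<and> hon_idx w i} = {}" by auto
  ultimately have "cH w c = cH w a + card {i. a < i \<and> i \<le> c \<and> hon_idx w i}"
    unfolding cH_def using card_Un_disjoint[of "{i. i \<le> a \<and> hon_idx w i}" "{i. a < i \<and> i \<le> c \<and> hon_idx w i}"] by (simp add: finite_idx_set)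
  then show ?thesis by simp
qed

lemma cA_mono: "a \<le> c \<Longrightarrow> cA w a \<le> cA w c"
  unfolding cA_def by (rule card_mono) auto
lemma cH_mono: "a \<le> c \<Longrightarrow> cH w a \<le> cH w c"
  unfolding cH_def by (rule card_mono) auto

lemma catalan_of_walk:
  assumes h: "1 \<le> h" "h \<le> length w"
    and pre: "\<And>j. j < h \<Longrightarrow> S w h < S w j"
    and post: "\<And>b. h \<le> b \<Longrightarrow> b \<le> length w \<Longrightarrow> S w b \<le> S w h"
  shows "catalan w h"
  unfolding catalan_def
proof (intro conjI allI impI)
  have "S w h < S w (h - 1)" using pre h by simp
  then have "hon_idx w h \<or> adv_idx w h"
    using h unfolding hon_idx_def adv_idx_def by auto
  moreover have "\<not> adv_idx w h"
  proof
    assume ah: "adv_idx w h"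
    have "card {i. h - 1 < i \<and> i \<le> h \<and> adv_idx w i} = 1"
    proof -
      have "{i. h - 1 < i \<and> i \<le> h \<and> adv_idx w i} = {h}" using ah h by auto
      then show ?thesis by simp
    qed
    moreover have "card {i. h - 1 < i \<and> i \<le> h \<and> hon_idx w i} = 0"
    proof -
      have "{i. h - 1 < i \<and> i \<le> h \<and> hon_idx w i} = {}"
      proof (intro set_eqI iffI)
        fix i assume "i \<in> {i. h - 1 < i \<and> i \<le> h \<and> hon_idx w i}"
        then have "i = h" "hon_idx w i" using h by auto
        then show "i \<in> {}" using ah hon_adv_excl by blast
      qed simp
      then show ?thesis by simp
    qed
    moreover have "h - 1 \<le> h" by simp
    ultimately have "cA w h = cA w (h - 1) + 1" "cH w h = cH w (h - 1)"
      using cA_split[of "h - 1" h w] cH_split[of "h - 1" h w] cA_mono[of "h - 1" h w] cH_mono[of "h - 1" h w]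
      by linarith+
    then show False using \<open>S w h < S w (h - 1)\<close> unfolding S_def by simp
  qed
  ultimately show "hon_idx w h" by simp
next
  fix a b assume ab: "a < h" "h < b" "b \<le> Suc (length w)"
  have c1: "a \<le> b - 1" using ab by simp
  have "S w (b - 1) \<le> S w h" using post ab by simp
  moreover have "S w h < S w a" using pre ab by simp
  ultimately have lt: "S w (b - 1) < S w a" by simp
  have e1: "{i. a < i \<and> i < b \<and> adv_idx w i} = {i. a < i \<and> i \<le> b - 1 \<and> adv_idx w i}" using ab by auto
  have e2: "{i. a < i \<and> i < b \<and> hon_idx w i} = {i. a < i \<and> i \<le> b - 1 \<and> hon_idx w i}" using ab by auto
  show "card {i. a < i \<and> i < b \<and> adv_idx w i} < card {i. a < i \<and> i < b \<and> hon_idx w i}"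
    unfolding e1 e2 cA_split[OF c1] cH_split[OF c1]
    using lt cA_mono[OF c1, of w] cH_mono[OF c1, of w] unfolding S_def by linarith
qed

section \<open>The state machine\<close>

datatype st = Dst nat | Ast nat nat

definition step :: "nat \<Rightarrow> nat \<Rightarrow> st \<Rightarrow> bool \<Rightarrow> st" where
  "step m n s b = (case s of
     Dst d \<Rightarrow> if b then Dst (Suc d) else (if d = 0 then (if n < m then Dst 0 else Ast 0 0) else Dst (d - 1))
   | Ast u v \<Rightarrow> if b then (if u = 0 then Dst (Suc v) else Ast (u - 1) v) else Ast (Suc u) (max v (Suc u)))"

fun stl :: "nat \<Rightarrow> bool list \<Rightarrow> st" where
  "stl m [] = Dst 0"
| "stl m (b # r) = step m (length r) (stl m r) b"

definition st :: "nat \<Rightarrow> bool list \<Rightarrow> st" where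
  "st m p = stl m (rev p)"

lemma st_Nil[simp]: "st m [] = Dst 0"
  unfolding st_def by simp

lemma st_snoc[simp]: "st m (p @ [b]) = step m (length p) (st m p) b"
  unfolding st_def by simp

definition stinv :: "nat \<Rightarrow> bool list \<Rightarrow> st \<Rightarrow> bool" where
  "stinv m p s = (case s of
     Dst d \<Rightarrow> int d = S p (length p) - minS p
   | Ast u v \<Rightarrow> (\<exists>h. m < h \<and> h \<le> length p \<and> (\<forall>j<h. S p h < S p j) \<and>
        (\<forall>b. h \<le> b \<and> b \<le> length p \<longrightarrow> S p b \<le> S p h) \<and>
        int u = S p h - S p (length p) \<and> int v = S p h - minS p))"

lemma S_zero: "S p 0 = 0"
proof -
  have "cA p 0 = 0" unfolding cA_def adv_idx_def by simp
  moreover have "cH p 0 = 0" unfolding cH_def hon_idx_def by simp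
  ultimately show ?thesis unfolding S_def by simp
qed

lemma minS_Nil: "minS [] = 0"
  unfolding minS_def using S_zero by simp

lemma inv_st: "stinv m p (st m p)"
proof (induction p rule: rev_induct)
  case Nil
  show ?case unfolding stinv_def using S_zero minS_Nil by simp
next
  case (snoc b p)
  let ?n = "length p"
  let ?p = "p @ [b]"
  have Sl: "S ?p (Suc ?n) = S p ?n + (if b then 1 else -1)" by (rule S_snoc_last)
  have Se: "\<And>j. j \<le> ?n \<Longrightarrow> S ?p j = S p j" by (rule S_snoc_le)
  have mS: "minS ?p = min (minS p) (S ?p (Suc ?n))" by (rule minS_snoc)
  have mle: "minS p \<le> S p ?n" by (rule minS_le) simp
  have mlej: "\<And>j. j \<le> ?n \<Longrightarrow> minS p \<le> S p j" by (rule minS_le)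
  show ?case
  proof (cases "st m p")
    case (Dst d)
    then have I: "int d = S p ?n - minS p" using snoc.IH unfolding stinv_def by simp
    show ?thesis
    proof (cases b)
      case True
      then show ?thesis using Dst I Sl mS mle by (simp add: stinv_def step_def)
    next
      case False
      show ?thesis
      proof (cases "d = 0")
        case d0: True
        show ?thesis
        proof (cases "?n < m")
          case True
          then show ?thesis using Dst I Sl mS mle False d0 by (simp add: stinv_def step_def)
        next
          case nm: False
          have "\<exists>h. m < h \<and> h \<le> length ?p \<and> (\<forall>j<h. S ?p h < S ?p j) \<and>
            (\<forall>b. h \<le> b \<and> b \<le> length ?p \<longrightarrow> S ?p b \<le> S ?p h) \<and>
            int 0 = S ?p h - S ?p (length ?p) \<and> int 0 = S ?p h - minS ?p"
          proof (intro exI[of _ "Suc ?n"] conjI allI impI)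
            show "m < Suc ?n" using nm by simp
            show "Suc ?n \<le> length ?p" by simp
          next
            fix j assume "j < Suc ?n"
            then have "j \<le> ?n" by simp
            then show "S ?p (Suc ?n) < S ?p j" using Se mlej I d0 Sl False by fastforce
          next
            fix b' assume "Suc ?n \<le> b' \<and> b' \<le> length ?p"
            then have "b' = Suc ?n" by simp
            then show "S ?p b' \<le> S ?p (Suc ?n)" by simp
          next
            show "int 0 = S ?p (Suc ?n) - S ?p (length ?p)" by simp
            show "int 0 = S ?p (Suc ?n) - minS ?p" using mS Sl False I d0 by simp
          qed
          then show ?thesis using Dst False d0 nm by (simp add: stinv_def step_def)
        qed
      next
        case False
        then show ?thesis using Dst I Sl mS mle \<open>\<not> b\<close> by (auto simp add: stinv_def step_def)
      qed
    qed
  next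
    case (Ast u v)
    then obtain h where h: "m < h" "h \<le> ?n" "\<forall>j<h. S p h < S p j"
        "\<forall>b. h \<le> b \<and> b \<le> ?n \<longrightarrow> S p b \<le> S p h" "int u = S p h - S p ?n" "int v = S p h - minS p"
      using snoc.IH unfolding stinv_def by auto
    have Sh: "S ?p h = S p h" using Se h(2) by simp
    have pre: "\<forall>j<h. S ?p h < S ?p j" using h(2,3) Se Sh by simp
    show ?thesis
    proof (cases b)
      case True
      show ?thesis
      proof (cases "u = 0")
        case True
        then show ?thesis using Ast \<open>b\<close> h Sl mS mle by (simp add: stinv_def step_def)
      next
        case False
        have post: "\<forall>b'. h \<le> b' \<and> b' \<le> length ?p \<longrightarrow> S ?p b' \<le> S ?p h"
        proof (intro allI impI)
          fix b' assume b': "h \<le> b' \<and> b' \<le> length ?p"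
          show "S ?p b' \<le> S ?p h"
          proof (cases "b' = Suc ?n")
            case True then show ?thesis using Sl Sh h(5) False \<open>b\<close> by simp
          next
            case False then show ?thesis using b' Se Sh h(4) by simp
          qed
        qed
        have "stinv m ?p (Ast (u - 1) v)"
          unfolding stinv_def using h(1,2) pre post Sl Sh h(5,6) mS mle \<open>b\<close> False
          by (auto intro!: exI[of _ h])
        then show ?thesis using Ast \<open>b\<close> False by (simp add: step_def)
      qed
    next
      case False
      have post: "\<forall>b'. h \<le> b' \<and> b' \<le> length ?p \<longrightarrow> S ?p b' \<le> S ?p h"
      proof (intro allI impI)
        fix b' assume b': "h \<le> b' \<and> b' \<le> length ?p"
        show "S ?p b' \<le> S ?p h"
        proof (cases "b' = Suc ?n")
          case True
          have "S p ?n \<le> S p h" using h(4,2) by simp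
          then show ?thesis using Sl Sh True False by simp
        next
          case False then show ?thesis using b' Se Sh h(4) by simp
        qed
      qed
      have "int (max v (Suc u)) = max (int v) (int u + 1)" by simp
      also have "\<dots> = S ?p h - minS ?p" using mS Sl Sh h(5,6) False by simp
      finally have vv: "int (max v (Suc u)) = S ?p h - minS ?p" .
      have "stinv m ?p (Ast (Suc u) (max v (Suc u)))"
        unfolding stinv_def using h(1,2) pre post Sl Sh h(5) vv False
        by (auto intro!: exI[of _ h])
      then show ?thesis using Ast False by (simp add: step_def)
    qed
  qed
qed

lemma st_A_catalan:
  assumes "st m w = Ast u v"
  shows "\<exists>h. m < h \<and> catalan w h"
proof -
  obtain h where h: "m < h" "h \<le> length w" "\<forall>j<h. S w h < S w j"
      "\<forall>b. h \<le> b \<and> b \<le> length w \<longrightarrow> S w b \<le> S w h"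
    using inv_st[of m w] assms unfolding stinv_def by auto
  have "catalan w h" using catalan_of_walk[of h w] h by simp
  then show ?thesis using h(1) by blast
qed

lemma st_shape: "st m p = Ast u v \<Longrightarrow> m < length p \<and> u \<le> v"
proof -
  assume a: "st m p = Ast u v"
  then obtain h where h: "m < h" "h \<le> length p" "int u = S p h - S p (length p)" "int v = S p h - minS p"
    using inv_st[of m p] unfolding stinv_def by auto
  have "minS p \<le> S p (length p)" by (rule minS_le) simp
  then show ?thesis using h by simp
qed

lemma mu_nonneg_st:
  assumes "m \<le> length w" "0 \<le> mu (take m w) (drop m w)"
  shows "\<exists>d. st m w = Dst d"
proof (rule ccontr)
  assume "\<not> ?thesis"
  then obtain u v where "st m w = Ast u v" by (cases "st m w") auto
  then obtain h where h: "m < h" "catalan w h" using st_A_catalan by blast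
  have "\<exists>F. balanced (take m w @ drop m w) m F"
    using balanced_iff_mu[of "take m w" m "drop m w"] assms by simp
  then show False using catalan_not_balanced[OF h(2) h(1)] by simp
qed



section \<open>Potential\<close>

definition Wst :: "real \<Rightarrow> real \<Rightarrow> real \<Rightarrow> st \<Rightarrow> real" where
  "Wst lam L c s = (case s of Dst d \<Rightarrow> lam ^ d | Ast u v \<Rightarrow> c * (1 / L) ^ u * lam ^ v)"

locale potc =
  fixes q lam L c bet :: real
  assumes q0: "0 \<le> q" and q1: "q \<le> 1" and lam1: "1 \<le> lam" and L0: "0 < L" and c0: "0 < c" and b0: "0 < bet" and b1: "bet < 1"
    and C1: "1 \<le> bet * lam"
    and C2: "q * lam + (1 - q) / lam \<le> bet"
    and C3: "c \<le> bet"
    and C4: "q * lam + (1 - q) * c \<le> bet"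
    and C5: "1 / L \<le> bet"
    and C6: "q * L + (1 - q) / L \<le> bet"
    and C7: "lam / L \<le> bet"
    and C8: "q * L + (1 - q) * lam / L \<le> bet"
    and C9: "q * lam + (1 - q) * c / L \<le> bet * c"
    and C10: "q * lam + (1 - q) * c * lam / L \<le> bet * c"
begin

abbreviation "W s \<equiv> Wst lam L c s"

lemma W_nonneg: "0 \<le> W s"
  unfolding Wst_def using lam1 L0 c0 by (cases s) auto

lemma post_step:
  assumes m: "m \<le> n" and sh: "\<And>u v. s = Ast u v \<Longrightarrow> u \<le> v"
  shows "W (step m n s False) \<le> bet * W s \<and> q * W (step m n s True) + (1 - q) * W (step m n s False) \<le> bet * W s"
proof (cases s)
  case (Dst d)
  show ?thesis
  proof (cases d)
    case 0
    then show ?thesis using Dst m C3 C4 unfolding step_def Wst_def by simp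
  next
    case (Suc d')
    have lp: "0 \<le> lam ^ d'" using lam1 by simp
    have a: "1 \<le> bet * lam" by (rule C1)
    have b: "q * (lam * lam) + (1 - q) \<le> bet * lam"
    proof -
      have "(q * lam + (1 - q) / lam) * lam \<le> bet * lam" using C2 lam1 by (simp add: mult_right_mono)
      moreover have "(q * lam + (1 - q) / lam) * lam = q * (lam * lam) + (1 - q)"
        using lam1 by (simp add: field_simps)
      ultimately show ?thesis by simp
    qed
    have "lam ^ d' \<le> bet * (lam * lam ^ d')" using mult_right_mono[OF a lp] by (simp add: ac_simps)
    moreover have "q * (lam * (lam * lam ^ d')) + (1 - q) * lam ^ d' \<le> bet * (lam * lam ^ d')"
      using mult_right_mono[OF b lp] by (simp add: algebra_simps)
    ultimately show ?thesis using Dst Suc unfolding step_def Wst_def by simp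
  qed
next
  case (Ast u v)
  have uv: "u \<le> v" using sh Ast by simp
  show ?thesis
  proof (cases u)
    case 0
    show ?thesis
    proof (cases v)
      case 0
      have "c * lam / L \<le> bet * c" using mult_left_mono[OF C7, of c] c0 by (simp add: ac_simps)
      then show ?thesis using Ast \<open>u = 0\<close> 0 C10 unfolding step_def Wst_def by (simp add: ac_simps)
    next
      case (Suc v')
      have lp: "0 \<le> lam ^ v" using lam1 by simp
      have "c / L \<le> bet * c" using mult_left_mono[OF C5, of c] c0 by (simp add: ac_simps)
      from mult_right_mono[OF this lp] have a: "c * lam ^ v / L \<le> bet * (c * lam ^ v)" by (simp add: ac_simps)
      from mult_right_mono[OF C9 lp] have b: "q * (lam * lam ^ v) + (1 - q) * (c * lam ^ v / L) \<le> bet * (c * lam ^ v)"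
        by (simp add: algebra_simps)
      show ?thesis using Ast \<open>u = 0\<close> Suc a b unfolding step_def Wst_def by (simp add: ac_simps)
    qed
  next
    case (Suc u')
    define x where "x = c * (1 / L) ^ u' * lam ^ v"
    have x0: "0 \<le> x" unfolding x_def using c0 L0 lam1 by simp
    show ?thesis
    proof (cases "Suc u \<le> v")
      case True
      have mx: "max v (Suc (Suc u')) = v" using True Suc by simp
      have e1: "W s = x / L" unfolding x_def Wst_def Ast Suc by (simp add: field_simps)
      have e2: "W (step m n s False) = x / L / L" unfolding x_def Wst_def Ast Suc step_def by (simp add: field_simps mx)
      have e3: "W (step m n s True) = x" unfolding x_def Wst_def Ast Suc step_def by simp
      have a: "x / L / L \<le> bet * (x / L)"
      proof -
        have "(1 / L) * (x / L) \<le> bet * (x / L)" by (rule mult_right_mono[OF C5]) (use x0 L0 in simp)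
        then show ?thesis by simp
      qed
      have b: "q * x + (1 - q) * (x / L / L) \<le> bet * (x / L)"
      proof -
        have "(q * L + (1 - q) / L) * (x / L) \<le> bet * (x / L)" by (rule mult_right_mono[OF C6]) (use x0 L0 in simp)
        then show ?thesis using L0 by (simp add: field_simps)
      qed
      show ?thesis using e1 e2 e3 a b by simp
    next
      case False
      then have vu: "v = u" using uv by simp
      define y where "y = c * (1 / L) ^ u' * lam ^ u"
      have y0: "0 \<le> y" unfolding y_def using c0 L0 lam1 by simp
      have e1: "W s = y / L" unfolding y_def Wst_def Ast Suc vu by (simp add: field_simps)
      have e2: "W (step m n s False) = y * lam / L / L" unfolding y_def Wst_def Ast Suc step_def vu by (simp add: field_simps)
      have e3: "W (step m n s True) = y" unfolding y_def Wst_def Ast Suc step_def vu by simp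
      have a: "y * lam / L / L \<le> bet * (y / L)"
      proof -
        have "(lam / L) * (y / L) \<le> bet * (y / L)" by (rule mult_right_mono[OF C7]) (use y0 L0 in simp)
        then show ?thesis by (simp add: ac_simps)
      qed
      have b: "q * y + (1 - q) * (y * lam / L / L) \<le> bet * (y / L)"
      proof -
        have "(q * L + (1 - q) * lam / L) * (y / L) \<le> bet * (y / L)" by (rule mult_right_mono[OF C8]) (use y0 L0 in simp)
        then show ?thesis using L0 by (simp add: field_simps)
      qed
      show ?thesis using e1 e2 e3 a b by simp
    qed
  qed
qed

definition th :: real where "th = q * lam + (1 - q) / lam"
definition A0 :: real where "A0 = q * lam + (1 - q)"

definition Vp :: "nat \<Rightarrow> nat \<Rightarrow> bool list \<Rightarrow> real" where
  "Vp m k p = (if length p \<le> m then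
      (case st m p of Dst d \<Rightarrow> bet ^ k * (th ^ (m - length p) * lam ^ d + A0 * (\<Sum>i<m - length p. th ^ i)) | Ast u v \<Rightarrow> 0)
    else bet ^ (m + k - length p) * W (st m p))"

lemma th0: "0 \<le> th" unfolding th_def using q0 q1 lam1 by simp
lemma th1: "th < 1" unfolding th_def using C2 b1 by simp
lemma A01: "1 \<le> A0"
proof -
  have "q * 1 \<le> q * lam" using q0 lam1 by (rule mult_left_mono[rotated])
  then show ?thesis unfolding A0_def by simp
qed
lemma thlam: "1 \<le> th * lam"
proof -
  have "th * lam = q * (lam * lam) + (1 - q)" unfolding th_def using lam1 by (simp add: field_simps)
  moreover have "0 \<le> q * (lam * lam)" using q0 lam1 by simp
  moreover have "q \<le> q * (lam * lam)" using q0 lam1 mult_left_mono[of 1 "lam * lam" q]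
    by (simp add: one_le_power[of lam 2, simplified power2_eq_square])
  ultimately show ?thesis by simp
qed

lemma Vp_nonneg: "0 \<le> Vp m k p"
proof -
  have "0 \<le> (\<Sum>i<m - length p. th ^ i)" using th0 by (simp add: sum_nonneg)
  show ?thesis
  proof (cases "length p \<le> m")
    case True
    show ?thesis
    proof (cases "st m p")
      case (Dst d)
      have "0 \<le> th ^ (m - length p) * lam ^ d + A0 * (\<Sum>i<m - length p. th ^ i)"
        using th0 lam1 A01 \<open>0 \<le> (\<Sum>i<m - length p. th ^ i)\<close> by simp
      then show ?thesis unfolding Vp_def using True Dst b0 by simp
    next
      case (Ast u v) then show ?thesis unfolding Vp_def using True by simp
    qed
  next
    case False then show ?thesis unfolding Vp_def using b0 W_nonneg by simp
  qed
qed

lemma Vp_post: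
  assumes "m \<le> length p"
  shows "Vp m k p = bet ^ (m + k - length p) * W (st m p)"
proof (cases "length p = m")
  case True
  then have "\<not> m < length p" by simp
  then obtain d where d: "st m p = Dst d" using st_shape[of m p] by (cases "st m p") auto
  then show ?thesis unfolding Vp_def using True by (simp add: Wst_def)
next
  case False
  then show ?thesis unfolding Vp_def using assms by simp
qed

lemma Vp_final:
  assumes "length p = m + k" "st m p = Dst d"
  shows "1 \<le> Vp m k p"
proof -
  have "Vp m k p = lam ^ d" using Vp_post[of m p k] assms by (simp add: Wst_def)
  then show ?thesis using lam1 by simp
qed

lemma Vp_Nil: "Vp m k [] \<le> bet ^ k * (1 + A0 / (1 - th))"
proof (cases "m = 0")
  case True
  then show ?thesis unfolding Vp_def using b0 A01 th1 by simp
next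
  case False
  have s: "(\<Sum>i<m. th ^ i) \<le> 1 / (1 - th)"
  proof -
    have "(\<Sum>i<m. th ^ i) = (1 - th ^ m) / (1 - th)" using th1 by (simp add: sum_gp_strict)
    also have "\<dots> \<le> 1 / (1 - th)" using th0 th1 by (simp add: divide_right_mono)
    finally show ?thesis .
  qed
  have p: "th ^ m \<le> 1" using th0 th1 by (simp add: power_le_one)
  have "th ^ m + A0 * (\<Sum>i<m. th ^ i) \<le> 1 + A0 * (1 / (1 - th))"
    using p mult_left_mono[OF s, of A0] A01 by simp
  then have "bet ^ k * (th ^ m + A0 * (\<Sum>i<m. th ^ i)) \<le> bet ^ k * (1 + A0 / (1 - th))"
    using b0 by (simp add: mult_left_mono)
  then show ?thesis unfolding Vp_def by simp
qed

lemma Vp_step: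
  assumes n: "length p < m + k"
  shows "Vp m k (p @ [False]) \<le> Vp m k p \<and> q * Vp m k (p @ [True]) + (1 - q) * Vp m k (p @ [False]) \<le> Vp m k p"
proof (cases "length p < m")
  case True
  then have "\<not> m < length p" by simp
  then obtain d where d: "st m p = Dst d" using st_shape[of m p] by (cases "st m p") auto
  obtain j where j: "m - length p = Suc j" using True by (cases "m - length p") auto
  have j2: "m - Suc (length p) = j" using j by simp
  define Sj where "Sj = (\<Sum>i<j. th ^ i)"
  have Vp: "Vp m k p = bet ^ k * (th ^ Suc j * lam ^ d + A0 * (Sj + th ^ j))"
    unfolding Vp_def Sj_def using True d j by simp
  have Vn: "Vp m k (p @ [b]) = bet ^ k * (th ^ j * lam ^ d' + A0 * Sj)"
    if b: "step m (length p) (Dst d) b = Dst d'" for b d'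
    unfolding Vp_def Sj_def using True d j2 b by simp
  define dF where "dF = (if d = 0 then 0 else d - 1)"
  have sF: "step m (length p) (Dst d) False = Dst dF" unfolding step_def dF_def using True by simp
  have sT: "step m (length p) (Dst d) True = Dst (Suc d)" unfolding step_def by simp
  have VF: "Vp m k (p @ [False]) = bet ^ k * (th ^ j * lam ^ dF + A0 * Sj)" using Vn[OF sF] .
  have VT: "Vp m k (p @ [True]) = bet ^ k * (th ^ j * lam ^ Suc d + A0 * Sj)" using Vn[OF sT] .
  have key1: "lam ^ dF \<le> th * lam ^ d + A0"
  proof (cases d)
    case 0 then show ?thesis unfolding dF_def using A01 th0 by simp
  next
    case (Suc d')
    have "lam ^ d' \<le> (th * lam) * lam ^ d'" using thlam lam1 mult_right_mono[OF thlam, of "lam ^ d'"] by simp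
    then show ?thesis unfolding dF_def using Suc A01 by (simp add: ac_simps)
  qed
  have key2: "q * lam ^ Suc d + (1 - q) * lam ^ dF \<le> th * lam ^ d + A0"
  proof (cases d)
    case 0 then show ?thesis unfolding dF_def A0_def using th0 by simp
  next
    case (Suc d')
    have "q * lam ^ Suc d + (1 - q) * lam ^ dF = (q * lam + (1 - q) / lam) * lam ^ d"
      unfolding dF_def using Suc lam1 by (simp add: field_simps)
    then show ?thesis unfolding th_def using A01 by simp
  qed
  have tj: "0 \<le> th ^ j" using th0 by simp
  have bk: "0 \<le> bet ^ k" using b0 by simp
  have "th ^ j * lam ^ dF + A0 * Sj \<le> th ^ Suc j * lam ^ d + A0 * (Sj + th ^ j)"
    using mult_left_mono[OF key1 tj] by (simp add: algebra_simps)
  then have a: "Vp m k (p @ [False]) \<le> Vp m k p" unfolding VF Vp using mult_left_mono[OF _ bk] by blast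
  have "q * (th ^ j * lam ^ Suc d + A0 * Sj) + (1 - q) * (th ^ j * lam ^ dF + A0 * Sj)
      = th ^ j * (q * lam ^ Suc d + (1 - q) * lam ^ dF) + A0 * Sj" by (simp add: algebra_simps)
  also have "\<dots> \<le> th ^ j * (th * lam ^ d + A0) + A0 * Sj" using mult_left_mono[OF key2 tj] by simp
  also have "\<dots> = th ^ Suc j * lam ^ d + A0 * (Sj + th ^ j)" by (simp add: algebra_simps)
  finally have "bet ^ k * (q * (th ^ j * lam ^ Suc d + A0 * Sj) + (1 - q) * (th ^ j * lam ^ dF + A0 * Sj))
      \<le> bet ^ k * (th ^ Suc j * lam ^ d + A0 * (Sj + th ^ j))" using bk mult_left_mono by blast
  then have b: "q * Vp m k (p @ [True]) + (1 - q) * Vp m k (p @ [False]) \<le> Vp m k p"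
    unfolding VF VT Vp by (simp add: algebra_simps)
  show ?thesis using a b by simp
next
  case False
  then have mn: "m \<le> length p" by simp
  obtain r where r: "m + k - length p = Suc r" using n by (cases "m + k - length p") auto
  have r2: "m + k - length (p @ [b]) = r" for b using r by simp
  have Vp: "Vp m k p = bet ^ Suc r * W (st m p)" using Vp_post[OF mn] r by simp
  have Vn: "Vp m k (p @ [b]) = bet ^ r * W (step m (length p) (st m p) b)" for b
    using Vp_post[of m "p @ [b]" k] mn r2[of b] by simp
  have sh: "\<And>u v. st m p = Ast u v \<Longrightarrow> u \<le> v" using st_shape by blast
  note P = post_step[OF mn sh]
  have br: "0 \<le> bet ^ r" using b0 by simp
  have a: "Vp m k (p @ [False]) \<le> Vp m k p"
    unfolding Vn Vp using mult_left_mono[OF conjunct1[OF P] br] by (simp add: ac_simps)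
  have "bet ^ r * (q * W (step m (length p) (st m p) True) + (1 - q) * W (step m (length p) (st m p) False))
      \<le> bet ^ r * (bet * W (st m p))" using mult_left_mono[OF conjunct2[OF P] br] .
  then have b: "q * Vp m k (p @ [True]) + (1 - q) * Vp m k (p @ [False]) \<le> Vp m k p"
    unfolding Vn Vp by (simp add: algebra_simps)
  show ?thesis using a b by simp
qed

end



section \<open>Supermartingale argument\<close>

definition pmass :: "bool list pmf \<Rightarrow> bool list \<Rightarrow> real" where
  "pmass W p = measure_pmf.prob W {w. take (length p) w = p}"

lemma pi_split:
  assumes supp: "set_pmf W \<subseteq> {w. length w = T}" and n: "length p < T"
  shows "pmass W p = pmass W (p @ [True]) + pmass W (p @ [False])"
proof -
  define A where "A = {w. take (length p) w = p}"
  define At where "At = {w. take (length p + 1) w = p @ [True]}"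
  define Af where "Af = {w. take (length p + 1) w = p @ [False]}"
  have eq: "A \<inter> set_pmf W = (At \<union> Af) \<inter> set_pmf W"
  proof (intro set_eqI iffI)
    fix w assume w: "w \<in> A \<inter> set_pmf W"
    then have "length w = T" using supp by auto
    then have "take (length p + 1) w = take (length p) w @ [w ! length p]"
      using n by (simp add: take_Suc_conv_app_nth)
    then show "w \<in> (At \<union> Af) \<inter> set_pmf W" using w unfolding A_def At_def Af_def by (cases "w ! length p") auto
  next
    fix w assume w: "w \<in> (At \<union> Af) \<inter> set_pmf W"
    then have "length w = T" using supp by auto
    then have "take (length p + 1) w = take (length p) w @ [w ! length p]"
      using n by (simp add: take_Suc_conv_app_nth)
    then show "w \<in> A \<inter> set_pmf W" using w unfolding A_def At_def Af_def by auto
  qed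
  have "measure_pmf.prob W A = measure_pmf.prob W (At \<union> Af)"
    using measure_Int_set_pmf[of W A] measure_Int_set_pmf[of W "At \<union> Af"] eq by simp
  also have "\<dots> = measure_pmf.prob W At + measure_pmf.prob W Af"
    by (rule measure_pmf.finite_measure_Union) (auto simp: At_def Af_def)
  finally show ?thesis unfolding pmass_def A_def At_def Af_def by simp
qed

lemma fin_lists: "finite {p :: bool list. length p = n}"
  using finite_lists_length_eq[of "UNIV :: bool set" n] by simp

lemma lists_Suc: "{p :: bool list. length p = Suc n} =
    (\<lambda>p. p @ [True]) ` {p. length p = n} \<union> (\<lambda>p. p @ [False]) ` {p. length p = n}"
proof (intro set_eqI iffI)
  fix p :: "bool list" assume "p \<in> {p. length p = Suc n}"
  then have l: "length p = Suc n" by simp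
  then have "p = butlast p @ [last p]" by (metis append_butlast_last_id list.size(3) nat.distinct(1))
  moreover have bl: "butlast p \<in> {p. length p = n}" using l by simp
  ultimately show "p \<in> (\<lambda>p. p @ [True]) ` {p. length p = n} \<union> (\<lambda>p. p @ [False]) ` {p. length p = n}"
  proof (cases "last p")
    case True
    then have "p \<in> (\<lambda>p. p @ [True]) ` {p. length p = n}"
      using \<open>p = butlast p @ [last p]\<close> bl by (intro image_eqI[of _ _ "butlast p"]) simp_all
    then show ?thesis by blast
  next
    case False
    then have "p \<in> (\<lambda>p. p @ [False]) ` {p. length p = n}"
      using \<open>p = butlast p @ [last p]\<close> bl by (intro image_eqI[of _ _ "butlast p"]) simp_all
    then show ?thesis by blast
  qed
qed auto

lemma supermart:
  fixes W :: "bool list pmf" and V :: "bool list \<Rightarrow> real"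
  assumes supp: "set_pmf W \<subseteq> {w. length w = T}"
    and mart: "\<And>p. length p < T \<Longrightarrow> pmass W (p @ [True]) \<le> q * pmass W p"
    and Vs: "\<And>p. length p < T \<Longrightarrow> V (p @ [False]) \<le> V p \<and> q * V (p @ [True]) + (1 - q) * V (p @ [False]) \<le> V p"
  shows "n \<le> T \<Longrightarrow> (\<Sum>p\<in>{p. length p = n}. pmass W p * V p) \<le> V []"
proof (induction n)
  case 0
  have "{p :: bool list. length p = 0} = {[]}" by auto
  moreover have "pmass W [] = 1" unfolding pmass_def by simp
  ultimately show ?case by simp
next
  case (Suc n)
  let ?L = "{p :: bool list. length p = n}"
  have fin: "finite ?L" by (rule fin_lists)
  have inj1: "inj_on (\<lambda>p. p @ [True]) ?L" by (rule inj_onI) simp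
  have inj2: "inj_on (\<lambda>p. p @ [False]) ?L" by (rule inj_onI) simp
  have dis: "(\<lambda>p. p @ [True]) ` ?L \<inter> (\<lambda>p. p @ [False]) ` ?L = {}" by auto
  have "(\<Sum>p\<in>{p. length p = Suc n}. pmass W p * V p)
      = (\<Sum>p\<in>(\<lambda>p. p @ [True]) ` ?L. pmass W p * V p) + (\<Sum>p\<in>(\<lambda>p. p @ [False]) ` ?L. pmass W p * V p)"
    unfolding lists_Suc using fin dis by (simp add: sum.union_disjoint)
  also have "\<dots> = (\<Sum>p\<in>?L. pmass W (p @ [True]) * V (p @ [True]) + pmass W (p @ [False]) * V (p @ [False]))"
    by (simp add: sum.reindex[OF inj1] sum.reindex[OF inj2] sum.distrib)
  also have "\<dots> \<le> (\<Sum>p\<in>?L. pmass W p * V p)"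
  proof (rule sum_mono)
    fix p assume "p \<in> ?L"
    then have n: "length p < T" using Suc.prems by simp
    have sp: "pmass W p = pmass W (p @ [True]) + pmass W (p @ [False])" using pi_split[OF supp n] .
    have mt: "pmass W (p @ [True]) \<le> q * pmass W p" using mart[OF n] .
    have v: "V (p @ [False]) \<le> V p" "q * V (p @ [True]) + (1 - q) * V (p @ [False]) \<le> V p" using Vs[OF n] by auto
    have p0: "0 \<le> pmass W p" "0 \<le> pmass W (p @ [True])" "0 \<le> pmass W (p @ [False])" unfolding pmass_def by auto
    show "pmass W (p @ [True]) * V (p @ [True]) + pmass W (p @ [False]) * V (p @ [False]) \<le> pmass W p * V p"
    proof (cases "V (p @ [False]) \<le> V (p @ [True])")
      case True
      have "pmass W (p @ [True]) * V (p @ [True]) + pmass W (p @ [False]) * V (p @ [False])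
          = pmass W (p @ [True]) * (V (p @ [True]) - V (p @ [False])) + pmass W p * V (p @ [False])"
        using sp by (simp add: algebra_simps)
      also have "\<dots> \<le> (q * pmass W p) * (V (p @ [True]) - V (p @ [False])) + pmass W p * V (p @ [False])"
        using mult_right_mono[OF mt] True by simp
      also have "\<dots> = pmass W p * (q * V (p @ [True]) + (1 - q) * V (p @ [False]))" by (simp add: algebra_simps)
      also have "\<dots> \<le> pmass W p * V p" using mult_left_mono[OF v(2) p0(1)] .
      finally show ?thesis .
    next
      case False
      have "pmass W (p @ [True]) * V (p @ [True]) \<le> pmass W (p @ [True]) * V (p @ [False])"
        using False p0(2) by (simp add: mult_left_mono)
      then have "pmass W (p @ [True]) * V (p @ [True]) + pmass W (p @ [False]) * V (p @ [False]) \<le> pmass W p * V (p @ [False])"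
        using sp by (simp add: algebra_simps)
      also have "\<dots> \<le> pmass W p * V p" using mult_left_mono[OF v(1) p0(1)] .
      finally show ?thesis .
    qed
  qed
  also have "\<dots> \<le> V []" using Suc by simp
  finally show ?case .
qed

lemma prob_bound:
  fixes W :: "bool list pmf" and V :: "bool list \<Rightarrow> real"
  assumes supp: "set_pmf W \<subseteq> {w. length w = T}"
    and mart: "\<And>p. length p < T \<Longrightarrow> pmass W (p @ [True]) \<le> q * pmass W p"
    and Vs: "\<And>p. length p < T \<Longrightarrow> V (p @ [False]) \<le> V p \<and> q * V (p @ [True]) + (1 - q) * V (p @ [False]) \<le> V p"
    and V0: "\<And>p. 0 \<le> V p"
    and V1: "\<And>p. length p = T \<Longrightarrow> p \<in> E \<Longrightarrow> 1 \<le> V p"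
  shows "measure_pmf.prob W E \<le> V []"
proof -
  let ?L = "{p :: bool list. length p = T}"
  have fin: "finite ?L" by (rule fin_lists)
  have "measure_pmf.prob W E = measure_pmf.prob W (E \<inter> set_pmf W)" by (simp add: measure_Int_set_pmf)
  also have "\<dots> \<le> measure_pmf.prob W (E \<inter> ?L)"
    using supp by (intro measure_pmf.finite_measure_mono) auto
  also have "\<dots> = sum (pmf W) (E \<inter> ?L)"
    by (rule measure_measure_pmf_finite) (use fin in auto)
  also have "\<dots> \<le> (\<Sum>p\<in>E \<inter> ?L. pmass W p * V p)"
  proof (rule sum_mono)
    fix p assume p: "p \<in> E \<inter> ?L"
    have "{w. take (length p) w = p} \<inter> set_pmf W = {p} \<inter> set_pmf W"
      using supp p by auto
    then have "pmass W p = measure_pmf.prob W {p}"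
      unfolding pmass_def using measure_Int_set_pmf[of W "{w. take (length p) w = p}"] measure_Int_set_pmf[of W "{p}"]
      by simp
    then have "pmass W p = pmf W p" by (simp add: measure_pmf_single)
    moreover have "1 \<le> V p" using V1 p by auto
    ultimately show "pmf W p \<le> pmass W p * V p"
      using pmf_nonneg[of W p] mult_left_mono[of 1 "V p" "pmf W p"] by simp
  qed
  also have "\<dots> \<le> (\<Sum>p\<in>?L. pmass W p * V p)"
    by (rule sum_mono2) (use fin V0 in \<open>auto simp: pmass_def\<close>)
  also have "\<dots> \<le> V []" by (rule supermart[OF supp mart Vs]) auto
  finally show ?thesis .
qed



section \<open>Existence of constants\<close>

lemma pos_near0:
  fixes g :: "real \<Rightarrow> real"
  assumes "(g has_real_derivative D) (at 0)" "0 < D" "g 0 = 0"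
  shows "\<forall>\<^sub>F x in at_right 0. 0 \<le> g x"
proof -
  obtain d where d: "0 < d" "\<forall>h>0. h < d \<longrightarrow> g 0 < g (0 + h)"
    using DERIV_pos_inc_right[OF assms(1,2)] by blast
  show ?thesis unfolding eventually_at_right_field
    using d assms(3) by (intro exI[of _ d]) auto
qed

lemma consts_exist:
  fixes \<epsilon> :: real
  assumes e0: "0 < \<epsilon>" and e1: "\<epsilon> < 1"
  defines "q \<equiv> (1 - \<epsilon>) / 2"
  shows "\<exists>lam L c bet. potc q lam L c bet"
proof -
  define b where "b = \<epsilon> / 2"
  define \<gamma> where "\<gamma> = (q + b) / (1 - q) + 1"
  define s where "s = (1 + b) + (1 - q + b) / \<epsilon> + (1 + b + q * \<gamma>) / (1 - q) + 1"
  have q0: "0 \<le> q" and q1: "q < 1/2" unfolding q_def using e0 e1 by auto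
  have qe: "1 - 2 * q = \<epsilon>" unfolding q_def by (simp add: field_simps)
  have b0: "0 < b" and b1: "b < 1/2" and be: "b < \<epsilon>" unfolding b_def using e0 e1 by auto
  have g1: "1 \<le> \<gamma>" unfolding \<gamma>_def using q0 q1 b0 by simp
  have g0: "(1 - q) * \<gamma> = q + b + (1 - q)" unfolding \<gamma>_def using q1 by (simp add: field_simps)
  have pa: "0 < (1 - q + b) / \<epsilon>" using q1 b0 e0 by simp
  have "0 < 1 + b + q * \<gamma>" using q0 b0 g1 by (simp add: add_pos_nonneg)
  then have pb: "0 < (1 + b + q * \<gamma>) / (1 - q)" using q1 by simp
  have s1: "s > 1 + b" unfolding s_def using pa pb by simp
  have s2: "s > (1 - q + b) / \<epsilon>" unfolding s_def using pa pb b0 by simp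
  have s3: "s > (1 + b + q * \<gamma>) / (1 - q)" unfolding s_def using pa pb b0 by simp
  have s2': "\<epsilon> * s > 1 - q + b" using s2 e0 by (simp add: field_simps)
  have s3': "(1 - q) * s > 1 + b + q * \<gamma>" using s3 q1 by (simp add: field_simps)
  have spos: "0 < s" using s1 b0 by simp
  define f1 where "f1 x = (1 - b * x) * (1 + x) - 1" for x
  define f2 where "f2 x = (1 - b * x) - q * (1 + x) - (1 - q) / (1 + x)" for x
  define f3 where "f3 x = (1 - b * x) - (1 - \<gamma> * x)" for x
  define f4 where "f4 x = (1 - b * x) - q * (1 + x) - (1 - q) * (1 - \<gamma> * x)" for x
  define f5 where "f5 x = (1 - b * x) - 1 / (1 + s * x)" for x
  define f6 where "f6 x = (1 - b * x) - q * (1 + s * x) - (1 - q) / (1 + s * x)" for x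
  define f7 where "f7 x = (1 - b * x) - (1 + x) / (1 + s * x)" for x
  define f8 where "f8 x = (1 - b * x) - q * (1 + s * x) - (1 - q) * (1 + x) / (1 + s * x)" for x
  define f9 where "f9 x = (1 - b * x) * (1 - \<gamma> * x) - q * (1 + x) - (1 - q) * (1 - \<gamma> * x) / (1 + s * x)" for x
  define f10 where "f10 x = (1 - b * x) * (1 - \<gamma> * x) - q * (1 + x) - (1 - q) * (1 - \<gamma> * x) * (1 + x) / (1 + s * x)" for x
  have d1: "(f1 has_real_derivative (1 - b)) (at 0)" unfolding f1_def
    by (auto intro!: derivative_eq_intros)
  have d2: "(f2 has_real_derivative (\<epsilon> - b)) (at 0)" unfolding f2_def
    by (auto intro!: derivative_eq_intros simp: qe[symmetric] algebra_simps)
  have d3: "(f3 has_real_derivative (\<gamma> - b)) (at 0)" unfolding f3_def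
    by (auto intro!: derivative_eq_intros)
  have d4: "(f4 has_real_derivative (1 - q)) (at 0)" unfolding f4_def
    using g0 by (auto intro!: derivative_eq_intros simp: algebra_simps)
  have d5: "(f5 has_real_derivative (s - b)) (at 0)" unfolding f5_def
    by (auto intro!: derivative_eq_intros)
  have d6: "(f6 has_real_derivative (\<epsilon> * s - b)) (at 0)" unfolding f6_def
    by (auto intro!: derivative_eq_intros simp: qe[symmetric] algebra_simps)
  have d7: "(f7 has_real_derivative (s - 1 - b)) (at 0)" unfolding f7_def
    by (auto intro!: derivative_eq_intros simp: algebra_simps)
  have d8: "(f8 has_real_derivative (\<epsilon> * s - (1 - q) - b)) (at 0)" unfolding f8_def
    by (auto intro!: derivative_eq_intros simp: qe[symmetric] algebra_simps)
  have d9: "(f9 has_real_derivative ((1 - q) * s - b - q * \<gamma> - q)) (at 0)" unfolding f9_def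
    by (auto intro!: derivative_eq_intros simp: algebra_simps)
  have d10: "(f10 has_real_derivative ((1 - q) * s - b - q * \<gamma> - 1)) (at 0)" unfolding f10_def
    by (auto intro!: derivative_eq_intros simp: algebra_simps)
  have E1: "\<forall>\<^sub>F x in at_right 0. 0 \<le> f1 x" by (rule pos_near0[OF d1]) (use b1 in \<open>simp_all add: f1_def\<close>)
  have E2: "\<forall>\<^sub>F x in at_right 0. 0 \<le> f2 x" by (rule pos_near0[OF d2]) (use be in \<open>simp_all add: f2_def\<close>)
  have E3: "\<forall>\<^sub>F x in at_right 0. 0 \<le> f3 x" by (rule pos_near0[OF d3]) (use b1 g1 in \<open>simp_all add: f3_def\<close>)
  have E4: "\<forall>\<^sub>F x in at_right 0. 0 \<le> f4 x" by (rule pos_near0[OF d4]) (use q1 in \<open>simp_all add: f4_def\<close>)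
  have E5: "\<forall>\<^sub>F x in at_right 0. 0 \<le> f5 x" by (rule pos_near0[OF d5]) (use s1 b0 in \<open>simp_all add: f5_def\<close>)
  have E6: "\<forall>\<^sub>F x in at_right 0. 0 \<le> f6 x" by (rule pos_near0[OF d6]) (use s2' q1 b0 in \<open>simp_all add: f6_def\<close>)
  have E7: "\<forall>\<^sub>F x in at_right 0. 0 \<le> f7 x" by (rule pos_near0[OF d7]) (use s1 in \<open>simp_all add: f7_def\<close>)
  have E8: "\<forall>\<^sub>F x in at_right 0. 0 \<le> f8 x" by (rule pos_near0[OF d8]) (use s2' in \<open>simp_all add: f8_def\<close>)
  have E9: "\<forall>\<^sub>F x in at_right 0. 0 \<le> f9 x" by (rule pos_near0[OF d9]) (use s3' q1 in linarith, simp add: f9_def)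
  have E10: "\<forall>\<^sub>F x in at_right 0. 0 \<le> f10 x" by (rule pos_near0[OF d10]) (use s3' in \<open>simp_all add: f10_def\<close>)
  have Ec: "\<forall>\<^sub>F x in at_right 0. x < 1 / \<gamma>"
    unfolding eventually_at_right_field using g1 by (intro exI[of _ "1 / \<gamma>"]) auto
  have Eb: "\<forall>\<^sub>F x in at_right 0. x < 1 / b"
    unfolding eventually_at_right_field using b0 by (intro exI[of _ "1 / b"]) auto
  have "\<forall>\<^sub>F x in at_right 0. 0 < x \<and> x < 1 / \<gamma> \<and> x < 1 / b \<and> 0 \<le> f1 x \<and> 0 \<le> f2 x \<and> 0 \<le> f3 x \<and> 0 \<le> f4 x \<and>
      0 \<le> f5 x \<and> 0 \<le> f6 x \<and> 0 \<le> f7 x \<and> 0 \<le> f8 x \<and> 0 \<le> f9 x \<and> 0 \<le> f10 x"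
    using eventually_at_right_less[of "0::real"] Ec Eb E1 E2 E3 E4 E5 E6 E7 E8 E9 E10 by eventually_elim auto
  then obtain x where x: "0 < x" "x < 1 / \<gamma>" "x < 1 / b" "0 \<le> f1 x" "0 \<le> f2 x" "0 \<le> f3 x" "0 \<le> f4 x"
      "0 \<le> f5 x" "0 \<le> f6 x" "0 \<le> f7 x" "0 \<le> f8 x" "0 \<le> f9 x" "0 \<le> f10 x"
    using eventually_happens[of _ "at_right (0::real)"] by auto
  have gx: "\<gamma> * x < 1" using x(2) g1 by (simp add: field_simps)
  have bx: "b * x < 1" using x(3) b0 by (simp add: field_simps)
  have "potc q (1 + x) (1 + s * x) (1 - \<gamma> * x) (1 - b * x)"
  proof
    show "0 \<le> q" by (rule q0)
    show "q \<le> 1" using q1 by simp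
    show "1 \<le> 1 + x" using x(1) by simp
    show "0 < 1 + s * x" using x(1) spos by (simp add: add_pos_pos)
    show "0 < 1 - \<gamma> * x" using gx by simp
    show "0 < 1 - b * x" using bx by simp
    show "1 - b * x < 1" using b0 x(1) by simp
    show "1 \<le> (1 - b * x) * (1 + x)" using x(4) unfolding f1_def by simp
    show "q * (1 + x) + (1 - q) / (1 + x) \<le> 1 - b * x" using x(5) unfolding f2_def by simp
    show "1 - \<gamma> * x \<le> 1 - b * x" using x(6) unfolding f3_def by simp
    show "q * (1 + x) + (1 - q) * (1 - \<gamma> * x) \<le> 1 - b * x" using x(7) unfolding f4_def by simp
    show "1 / (1 + s * x) \<le> 1 - b * x" using x(8) unfolding f5_def by simp
    show "q * (1 + s * x) + (1 - q) / (1 + s * x) \<le> 1 - b * x" using x(9) unfolding f6_def by simp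
    show "(1 + x) / (1 + s * x) \<le> 1 - b * x" using x(10) unfolding f7_def by simp
    show "q * (1 + s * x) + (1 - q) * (1 + x) / (1 + s * x) \<le> 1 - b * x" using x(11) unfolding f8_def by simp
    show "q * (1 + x) + (1 - q) * (1 - \<gamma> * x) / (1 + s * x) \<le> (1 - b * x) * (1 - \<gamma> * x)"
      using x(12) unfolding f9_def by simp
    show "q * (1 + x) + (1 - q) * (1 - \<gamma> * x) * (1 + x) / (1 + s * x) \<le> (1 - b * x) * (1 - \<gamma> * x)"
      using x(13) unfolding f10_def by simp
  qed
  then show ?thesis by blast
qed



theorem theorem4:
  fixes \<epsilon> :: real
  assumes "0 < \<epsilon>" and "\<epsilon> < 1"
  shows "\<exists>C c. c > 0 \<and>
    (\<forall>(T::nat) (k::nat) (W :: bool list pmf).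
       k \<le> T \<longrightarrow> set_pmf W \<subseteq> {w. length w = T} \<longrightarrow> martingale_cond \<epsilon> T W \<longrightarrow>
       measure_pmf.prob W {w. \<exists>F. balanced w (T - k) F}
         = measure_pmf.prob W {w. mu (take (T - k) w) (drop (T - k) w) \<ge> 0}
       \<and> measure_pmf.prob W {w. mu (take (T - k) w) (drop (T - k) w) \<ge> 0}
         \<le> C * exp (- c * real k))"
proof -
  define q where "q = (1 - \<epsilon>) / 2"
  obtain lam L cc bet where pc: "potc q lam L cc bet" using consts_exist[OF assms] unfolding q_def by blast
  interpret P: potc q lam L cc bet by (rule pc)
  define C where "C = 1 + P.A0 / (1 - P.th)"
  define c where "c = - ln bet"
  have c0: "0 < c" unfolding c_def using P.b0 P.b1 by simp
  have main: "measure_pmf.prob W {w. \<exists>F. balanced w (T - k) F}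
         = measure_pmf.prob W {w. mu (take (T - k) w) (drop (T - k) w) \<ge> 0}
       \<and> measure_pmf.prob W {w. mu (take (T - k) w) (drop (T - k) w) \<ge> 0}
         \<le> C * exp (- c * real k)"
    if kT: "k \<le> T" and supp: "set_pmf W \<subseteq> {w. length w = T}" and mc: "martingale_cond \<epsilon> T W" for T k W
  proof -
    define m where "m = T - k"
    have Tmk: "T = m + k" unfolding m_def using kT by simp
    let ?A = "{w. \<exists>F. balanced w m F}"
    let ?B = "{w. mu (take m w) (drop m w) \<ge> 0}"
    let ?E = "{w. \<exists>d. st m w = Dst d}"
    have AB: "?A \<inter> set_pmf W = ?B \<inter> set_pmf W"
    proof (intro set_eqI iffI)
      fix w assume w: "w \<in> ?A \<inter> set_pmf W"
      then have "length w = T" using supp by auto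
      then have "length (take m w) = m" using Tmk by simp
      then show "w \<in> ?B \<inter> set_pmf W" using w balanced_iff_mu[of "take m w" m "drop m w"] by simp
    next
      fix w assume w: "w \<in> ?B \<inter> set_pmf W"
      then have "length w = T" using supp by auto
      then have "length (take m w) = m" using Tmk by simp
      then show "w \<in> ?A \<inter> set_pmf W" using w balanced_iff_mu[of "take m w" m "drop m w"] by simp
    qed
    have eq: "measure_pmf.prob W ?A = measure_pmf.prob W ?B"
      using measure_Int_set_pmf[of W ?A] measure_Int_set_pmf[of W ?B] AB by simp
    have BE: "?B \<inter> set_pmf W \<subseteq> ?E"
    proof
      fix w assume w: "w \<in> ?B \<inter> set_pmf W"
      then have "length w = T" using supp by auto
      then show "w \<in> ?E" using w mu_nonneg_st[of m w] Tmk by auto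
    qed
    have "measure_pmf.prob W ?B = measure_pmf.prob W (?B \<inter> set_pmf W)" by (simp add: measure_Int_set_pmf)
    also have "\<dots> \<le> measure_pmf.prob W ?E" using BE by (intro measure_pmf.finite_measure_mono) auto
    also have "\<dots> \<le> P.Vp m k []"
    proof (rule prob_bound[OF supp])
      fix p :: "bool list" assume p: "length p < T"
      show "pmass W (p @ [True]) \<le> q * pmass W p"
        using mc p unfolding martingale_cond_def pmass_def q_def by simp
      show "P.Vp m k (p @ [False]) \<le> P.Vp m k p \<and> q * P.Vp m k (p @ [True]) + (1 - q) * P.Vp m k (p @ [False]) \<le> P.Vp m k p"
        using P.Vp_step[of p m k] p Tmk by simp
    next
      fix p show "0 \<le> P.Vp m k p" by (rule P.Vp_nonneg)
    next
      fix p :: "bool list" assume "length p = T" "p \<in> ?E"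
      then show "1 \<le> P.Vp m k p" using P.Vp_final[of p m k] Tmk by auto
    qed
    also have "\<dots> \<le> bet ^ k * C" unfolding C_def by (rule P.Vp_Nil)
    also have "\<dots> = C * exp (- c * real k)"
    proof -
      have "exp (- c * real k) = exp (real k * ln bet)" unfolding c_def by (simp add: ac_simps)
      also have "\<dots> = exp (ln bet) ^ k" by (rule exp_of_nat_mult)
      also have "\<dots> = bet ^ k" using P.b0 by simp
      finally show ?thesis by simp
    qed
    finally show ?thesis using eq unfolding m_def by simp
  qed
  show ?thesis using c0 main by blast
qed


end
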